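(* For any probability density $f$ on $\mathbb R^d$ with finite first moment and any estimator $\tilde f_n$ of $f$ (a possibly signed integrable function with $\int\tilde f_n=1$) which has a finite first moment almost surely, $$W_1(\tilde f_n,f)\lesssim\sum_{k\in\mathbb Z^d}\|k\|\,|\langle f-\tilde f_n,\phi_k\rangle|+\sum_{l\ge0}2^{-l(\frac d2+1)}\sum_{k}|\langle f-\tilde f_n,\psi_{lk}\rangle|,$$ where the constant depends only on the wavelet basis.
   Context: $\{\phi_k,\psi_{lk}:k\in\mathbb Z^d,l\ge0\}$ is an $S$-regular, compactly supported tensor-product Daubechies wavelet orthonormal basis of $L_2(\mathbb R^d)$, $\phi_k=\phi(\cdot-k)$, $\psi_{lk}=2^{ld/2}\psi^\iota(2^l\cdot-k)$ with the type $\iota\in\{0,1\}^d\setminus\{0\}$ suppressed (sums over $k$ for $\psi_{lk}$ run over $k\in\mathbb Z^d$ and all types). $\langle f,g\rangle=\int fg$. For (possibly signed) $f,g$ of equal total mass with finite first moments, $W_1(f,g)=\sup_h\int_{\mathbb R^d}h(f-g)$ over 1-Lipschitz $h:\mathbb R^d\to\mathbb R$ (Kantorovich–Rubinstein), which is the 1-Wasserstein distance when $f,g$ are probability densities; finite first moment means $\int\|x\||f(x)|dx<\infty$. *)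

theory Defs
  imports "HOL-Analysis.Analysis"
begin

definition wip :: "('a::euclidean_space \<Rightarrow> real) \<Rightarrow> ('a \<Rightarrow> real) \<Rightarrow> real" where
  "wip u v = (LINT x|lborel. u x * v x)"

text \<open>Kantorovich-Rubinstein form of the 1-Wasserstein distance (for possibly signed f, g).\<close>
definition W1 :: "('a::euclidean_space \<Rightarrow> real) \<Rightarrow> ('a \<Rightarrow> real) \<Rightarrow> real" where
  "W1 f g = (SUP h \<in> {h :: 'a \<Rightarrow> real. 1-lipschitz_on UNIV h}. LINT x|lborel. h x * (f x - g x))"

definition finite_first_moment :: "('a::euclidean_space \<Rightarrow> real) \<Rightarrow> bool" where
  "finite_first_moment f \<longleftrightarrow> integrable lborel (\<lambda>x. norm x * \<bar>f x\<bar>)"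

definition prob_density :: "('a::euclidean_space \<Rightarrow> real) \<Rightarrow> bool" where
  "prob_density f \<longleftrightarrow> f \<in> borel_measurable lborel \<and> (\<forall>x. 0 \<le> f x) \<and>
     integrable lborel f \<and> (LINT x|lborel. f x) = 1"

definition C_reg :: "nat \<Rightarrow> (real \<Rightarrow> real) \<Rightarrow> bool" where
  "C_reg S u \<longleftrightarrow> (\<forall>j\<le>S. continuous_on UNIV ((deriv ^^ j) u)) \<and>
                  (\<forall>j<S. \<forall>x. (deriv ^^ j) u differentiable (at x))"

definition compact_supp :: "(real \<Rightarrow> real) \<Rightarrow> bool" where
  "compact_supp u \<longleftrightarrow> (\<exists>a. \<forall>x. a < \<bar>x\<bar> \<longrightarrow> u x = 0)"

definition int_vec :: "('n::finite \<Rightarrow> int) \<Rightarrow> real^'n" where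
  "int_vec k = (\<chi> i. real_of_int (k i))"

definition phi_k :: "(real \<Rightarrow> real) \<Rightarrow> ('n::finite \<Rightarrow> int) \<Rightarrow> real^'n \<Rightarrow> real" where
  "phi_k \<phi>0 k x = (\<Prod>i\<in>UNIV. \<phi>0 (x $ i - real_of_int (k i)))"

definition psi_type :: "(real \<Rightarrow> real) \<Rightarrow> (real \<Rightarrow> real) \<Rightarrow> ('n::finite \<Rightarrow> bool) \<Rightarrow> real^'n \<Rightarrow> real" where
  "psi_type \<phi>0 \<psi>0 \<iota> x = (\<Prod>i\<in>UNIV. (if \<iota> i then \<psi>0 else \<phi>0) (x $ i))"

definition wtypes :: "('n::finite \<Rightarrow> bool) set" where
  "wtypes = {\<iota>. \<iota> \<noteq> (\<lambda>_. False)}"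

definition psi_lk :: "(real \<Rightarrow> real) \<Rightarrow> (real \<Rightarrow> real) \<Rightarrow> nat \<Rightarrow> ('n::finite \<Rightarrow> bool)
                       \<Rightarrow> ('n \<Rightarrow> int) \<Rightarrow> real^'n \<Rightarrow> real" where
  "psi_lk \<phi>0 \<psi>0 l \<iota> k x =
     2 powr (real l * real CARD('n) / 2) * psi_type \<phi>0 \<psi>0 \<iota> (2 ^ l *\<^sub>R x - int_vec k)"

definition wsys :: "(real \<Rightarrow> real) \<Rightarrow> (real \<Rightarrow> real)
                    \<Rightarrow> (('n::finite \<Rightarrow> int) + (nat \<times> ('n \<Rightarrow> bool) \<times> ('n \<Rightarrow> int))) \<Rightarrow> real^'n \<Rightarrow> real" where
  "wsys \<phi>0 \<psi>0 a = (case a of Inl k \<Rightarrow> phi_k \<phi>0 k | Inr (l, \<iota>, k) \<Rightarrow> psi_lk \<phi>0 \<psi>0 l \<iota> k)"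

definition wsys_index :: "(('n::finite \<Rightarrow> int) + (nat \<times> ('n \<Rightarrow> bool) \<times> ('n \<Rightarrow> int))) set" where
  "wsys_index = range Inl \<union> Inr ` (UNIV \<times> wtypes \<times> UNIV)"

definition square_integrable :: "('a::euclidean_space \<Rightarrow> real) \<Rightarrow> bool" where
  "square_integrable u \<longleftrightarrow> u \<in> borel_measurable lborel \<and> integrable lborel (\<lambda>x. (u x)\<^sup>2)"

text \<open>Orthonormal basis of L2(real^'n): orthonormal system which is complete
  (Parseval identity for every square-integrable function).\<close>
definition is_ONB :: "('i \<Rightarrow> ('a::euclidean_space \<Rightarrow> real)) \<Rightarrow> 'i set \<Rightarrow> bool" where
  "is_ONB b I \<longleftrightarrow>
     (\<forall>a\<in>I. square_integrable (b a)) \<and>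
     (\<forall>a\<in>I. \<forall>a'\<in>I. wip (b a) (b a') = (if a = a' then 1 else 0)) \<and>
     (\<forall>u. square_integrable u \<longrightarrow> ((\<lambda>a. (wip u (b a))\<^sup>2) has_sum (LINT x|lborel. (u x)\<^sup>2)) I)"

definition wavelet_basis :: "'n::finite itself \<Rightarrow> nat \<Rightarrow> (real \<Rightarrow> real) \<Rightarrow> (real \<Rightarrow> real) \<Rightarrow> bool" where
  "wavelet_basis _ S \<phi>0 \<psi>0 \<longleftrightarrow>
     C_reg S \<phi>0 \<and> C_reg S \<psi>0 \<and> compact_supp \<phi>0 \<and> compact_supp \<psi>0 \<and>
     is_ONB (wsys \<phi>0 \<psi>0 :: _ \<Rightarrow> real^'n \<Rightarrow> real) wsys_index"

end

theory Submission
  imports Defs "HOL-Library.FuncSet"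
begin
lemma nn_integral_affine_eu:
  fixes f :: "'a::euclidean_space \<Rightarrow> ennreal" and c :: real
  assumes [measurable]: "f \<in> borel_measurable borel" and c: "c \<noteq> 0"
  shows "(\<integral>\<^sup>+x. f x \<partial>lborel) = \<bar>c\<bar>^DIM('a) * (\<integral>\<^sup>+x. f (t + c *\<^sub>R x) \<partial>lborel)"
  by (subst lborel_affine[OF c, of t])
     (simp add: nn_integral_density nn_integral_distr nn_integral_cmult)

lemma integrable_affine_eu:
  fixes f :: "'a::euclidean_space \<Rightarrow> real"
  assumes f: "integrable lborel f" and c: "c \<noteq> 0"
  shows "integrable lborel (\<lambda>x. f (t + c *\<^sub>R x))"
  using f f[THEN borel_measurable_integrable] unfolding integrable_iff_bounded
  by (subst (asm) nn_integral_affine_eu[where c=c and t=t]) (auto simp: ennreal_mult_less_top c)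

lemma integrable_affine_eu_iff:
  fixes f :: "'a::euclidean_space \<Rightarrow> real"
  assumes c: "c \<noteq> 0"
  shows "integrable lborel (\<lambda>x. f (t + c *\<^sub>R x)) \<longleftrightarrow> integrable lborel f"
proof
  assume "integrable lborel (\<lambda>x. f (t + c *\<^sub>R x))"
  from integrable_affine_eu[OF this, of "1/c" "- t /\<^sub>R c"] c
  show "integrable lborel f" by (simp add: algebra_simps)
qed (use integrable_affine_eu c in auto)

lemma integral_affine_eu:
  fixes f :: "'a::euclidean_space \<Rightarrow> real" and c :: real
  assumes c: "c \<noteq> 0"
  shows "(\<integral>x. f x \<partial> lborel) = \<bar>c\<bar>^DIM('a) * (\<integral>x. f (t + c *\<^sub>R x) \<partial>lborel)"
proof cases
  assume f[measurable]: "integrable lborel f" then show ?thesis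
    using c f f[THEN borel_measurable_integrable] f[THEN integrable_affine_eu, of c t]
    by (subst lborel_affine[OF c, of t])
       (simp add: integral_density integral_distr)
next
  assume "\<not> integrable lborel f" with c show ?thesis
    by (simp add: integrable_affine_eu_iff not_integrable_integral_eq)
qed

definition csf :: "('a::euclidean_space \<Rightarrow> real) \<Rightarrow> real \<Rightarrow> bool" where
  "csf \<Theta> B \<longleftrightarrow> continuous_on UNIV \<Theta> \<and> 0 \<le> B \<and> (\<forall>y. B < norm y \<longrightarrow> \<Theta> y = 0)"

lemma csf_bounded: assumes "csf \<Theta> B" shows "\<exists>M\<ge>0. \<forall>y. \<bar>\<Theta> y\<bar> \<le> M"
proof -
  have "compact (\<Theta> ` cball 0 B)"
    using assms unfolding csf_def by (intro compact_continuous_image) (auto intro: continuous_on_subset)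
  then obtain M where M: "\<forall>z\<in>\<Theta> ` cball 0 B. norm z \<le> M" using compact_imp_bounded bounded_iff by metis
  show ?thesis
  proof (intro exI[of _ "max M 0"] conjI allI)
    fix y show "\<bar>\<Theta> y\<bar> \<le> max M 0"
      using M assms unfolding csf_def by (cases "norm y \<le> B") (force simp: dist_norm)+
  qed simp
qed

lemma csf_measurable: "csf \<Theta> B \<Longrightarrow> \<Theta> \<in> borel_measurable borel"
  unfolding csf_def by (auto intro: borel_measurable_continuous_onI)

lemma csf_integrable_cont:
  assumes "csf \<Theta> B" "continuous_on UNIV v"
  shows "integrable lborel (\<lambda>x. v x * \<Theta> x)"
proof -
  have "integrable lborel (\<lambda>x. indicator (cball 0 B) x *\<^sub>R (v x * \<Theta> x))"
    using assms unfolding csf_def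
    by (intro borel_integrable_compact) (auto intro: continuous_on_subset continuous_intros)
  also have "(\<lambda>x. indicator (cball 0 B) x *\<^sub>R (v x * \<Theta> x)) = (\<lambda>x. v x * \<Theta> x)"
    using assms unfolding csf_def by (auto simp: indicator_def fun_eq_iff)
  finally show ?thesis .
qed

lemma csf_integrable: "csf \<Theta> B \<Longrightarrow> integrable lborel \<Theta>"
  using csf_integrable_cont[of \<Theta> B "\<lambda>_. 1"] by simp

lemma csf_integrable_mult:
  assumes "csf \<Theta> B" "integrable lborel v"
  shows "integrable lborel (\<lambda>x. v x * \<Theta> x)"
proof -
  obtain M where M: "M \<ge> 0" "\<And>y. \<bar>\<Theta> y\<bar> \<le> M" using csf_bounded[OF assms(1)] by blast
  show ?thesis
  proof -
    have i: "integrable lborel (\<lambda>x. M * v x)" using assms by auto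
    have m: "(\<lambda>x. v x * \<Theta> x) \<in> borel_measurable lborel"
      using assms csf_measurable[OF assms(1)] by (auto intro!: borel_measurable_times)
    have "\<bar>v x * \<Theta> x\<bar> \<le> \<bar>M * v x\<bar>" for x
    proof -
      have "\<bar>v x\<bar> * \<bar>\<Theta> x\<bar> \<le> \<bar>v x\<bar> * M" by (rule mult_left_mono[OF M(2)]) simp
      then show ?thesis using M(1) by (simp add: abs_mult mult.commute)
    qed
    then have "AE x in lborel. norm (v x * \<Theta> x) \<le> norm (M * v x)" by simp
    from Bochner_Integration.integrable_bound[OF i m this] show ?thesis .
  qed
qed

lemma csf_abs: "csf \<Theta> B \<Longrightarrow> csf (\<lambda>x. \<bar>\<Theta> x\<bar>) B"
  unfolding csf_def by (auto intro: continuous_intros)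

definition atom :: "(real^'n \<Rightarrow> real) \<Rightarrow> nat \<Rightarrow> ('n::finite \<Rightarrow> int) \<Rightarrow> real^'n \<Rightarrow> real" where
  "atom \<Theta> l k x = 2 powr (real l * real CARD('n) / 2) * \<Theta> (2 ^ l *\<^sub>R x - int_vec k)"

lemma atom_support:
  assumes "csf \<Theta> B" "atom \<Theta> l k x \<noteq> 0"
  shows "norm (2 ^ l *\<^sub>R x - int_vec k) \<le> B"
  using assms unfolding csf_def atom_def by (metis mult_zero_right not_le)

lemma atom_csf:
  fixes \<Theta> :: "real^'n::finite \<Rightarrow> real"
  assumes "csf \<Theta> B"
  shows "csf (atom \<Theta> l k) ((B + norm (int_vec k)) / 2 ^ l)"
  unfolding csf_def
proof (intro conjI allI impI)
  show "continuous_on UNIV (atom \<Theta> l k)"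
  proof -
    have c1: "continuous_on UNIV (\<lambda>x. 2 ^ l *\<^sub>R x - int_vec k)"
      by (intro continuous_on_diff continuous_on_scaleR continuous_on_const continuous_on_id)
    have c2: "continuous_on UNIV \<Theta>" using assms unfolding csf_def by simp
    have "continuous_on UNIV (\<Theta> \<circ> (\<lambda>x. 2 ^ l *\<^sub>R x - int_vec k))"
      by (rule continuous_on_compose[OF c1 continuous_on_subset[OF c2]]) simp
    then have "continuous_on UNIV (\<lambda>x. \<Theta> (2 ^ l *\<^sub>R x - int_vec k))" by (simp add: o_def)
    then show ?thesis unfolding atom_def by (intro continuous_on_mult continuous_on_const)
  qed
  show "0 \<le> (B + norm (int_vec k)) / 2 ^ l" using assms by (auto simp: csf_def)
  fix y :: "real^'n" assume y: "(B + norm (int_vec k)) / 2 ^ l < norm y"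
  show "atom \<Theta> l k y = 0"
  proof (rule ccontr)
    assume "atom \<Theta> l k y \<noteq> 0"
    from atom_support[OF assms this] have "norm (2 ^ l *\<^sub>R y - int_vec k) \<le> B" .
    moreover have "norm (2 ^ l *\<^sub>R y) \<le> norm (2 ^ l *\<^sub>R y - int_vec k) + norm (int_vec k)"
      by (metis diff_add_cancel norm_triangle_ineq)
    ultimately have "2 ^ l * norm y \<le> B + norm (int_vec k)" by simp
    with y show False by (simp add: field_simps)
  qed
qed

lemma DIM_cart: "DIM(real^'n::finite) = CARD('n)" by simp

lemma atom_integral_gen:
  fixes G :: "real^'n::finite \<Rightarrow> real"
  shows "(\<integral>x. G (2 ^ l *\<^sub>R x - int_vec k) \<partial>lborel) = (\<integral>x. G x \<partial>lborel) / 2 ^ (l * CARD('n))"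
proof -
  have "(\<integral>x. G x \<partial>lborel) = \<bar>2 ^ l\<bar> ^ DIM(real^'n) * (\<integral>x. G (- int_vec k + (2 ^ l) *\<^sub>R x) \<partial>lborel)"
    by (rule integral_affine_eu) simp
  then show ?thesis by (simp add: power_mult[symmetric] mult.commute)
qed

lemma atom_integral:
  fixes \<Theta> :: "real^'n::finite \<Rightarrow> real"
  shows "(\<integral>x. atom \<Theta> l k x \<partial>lborel) = 2 powr (- (real l * real CARD('n) / 2)) * (\<integral>x. \<Theta> x \<partial>lborel)"
proof -
  have "(\<integral>x. atom \<Theta> l k x \<partial>lborel) = 2 powr (real l * real CARD('n) / 2) * ((\<integral>x. \<Theta> x \<partial>lborel) / 2 ^ (l * CARD('n)))"
    unfolding atom_def by (simp add: atom_integral_gen)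
  also have "2 ^ (l * CARD('n)) = (2::real) powr (real l * real CARD('n))"
    by (simp add: powr_realpow[symmetric])
  also have "2 powr (real l * real CARD('n) / 2) * ((\<integral>x. \<Theta> x \<partial>lborel) / 2 powr (real l * real CARD('n)))
     = 2 powr (- (real l * real CARD('n) / 2)) * (\<integral>x. \<Theta> x \<partial>lborel)"
  proof -
    have "2 powr (real l * real CARD('n)) = 2 powr (real l * real CARD('n) / 2) * 2 powr (real l * real CARD('n) / 2)"
      by (simp add: powr_add[symmetric])
    then show ?thesis by (simp add: powr_minus field_simps)
  qed
  finally show ?thesis .
qed

lemma atom_abs: "\<bar>atom \<Theta> l k x\<bar> = atom (\<lambda>y. \<bar>\<Theta> y\<bar>) l k x"
  unfolding atom_def by (simp add: abs_mult)

lemma coef_bound_ennreal: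
  fixes f :: "'a::euclidean_space \<Rightarrow> real"
  shows "ennreal \<bar>\<integral>x. f x \<partial>lborel\<bar> \<le> (\<integral>\<^sup>+x. ennreal \<bar>f x\<bar> \<partial>lborel)"
proof (cases "integrable lborel f")
  case True then show ?thesis using integral_norm_bound_ennreal[OF True] by simp
next
  case False then show ?thesis by (simp add: not_integrable_integral_eq)
qed

lemma atom_lip:
  fixes \<Theta> v :: "real^'n::finite \<Rightarrow> real"
  assumes cs: "csf \<Theta> B" and int0: "(\<integral>x. \<Theta> x \<partial>lborel) = 0"
    and vc: "continuous_on UNIV v" and lip: "\<And>x y. \<bar>v x - v y\<bar> \<le> L * dist x y" and L: "0 \<le> L"
  shows "\<bar>\<integral>x. v x * atom \<Theta> l k x \<partial>lborel\<bar>
           \<le> L * B * 2 powr (- (real l * (real CARD('n) / 2 + 1))) * (\<integral>x. \<bar>\<Theta> x\<bar> \<partial>lborel)"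
proof -
  define x0 :: "real^'n" where "x0 = (1 / 2 ^ l) *\<^sub>R int_vec k"
  have acs: "csf (atom \<Theta> l k) ((B + norm (int_vec k)) / 2 ^ l)" by (rule atom_csf[OF cs])
  have aacs: "csf (atom (\<lambda>y. \<bar>\<Theta> y\<bar>) l k) ((B + norm (int_vec k)) / 2 ^ l)"
    by (rule atom_csf[OF csf_abs[OF cs]])
  have ia: "integrable lborel (atom \<Theta> l k)" by (rule csf_integrable[OF acs])
  have iv: "integrable lborel (\<lambda>x. v x * atom \<Theta> l k x)" by (rule csf_integrable_cont[OF acs vc])
  have iaa: "integrable lborel (atom (\<lambda>y. \<bar>\<Theta> y\<bar>) l k)" by (rule csf_integrable[OF aacs])
  have ia0: "(\<integral>x. atom \<Theta> l k x \<partial>lborel) = 0" by (simp add: atom_integral int0)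
  have "(\<integral>x. v x * atom \<Theta> l k x \<partial>lborel) = (\<integral>x. (v x - v x0) * atom \<Theta> l k x \<partial>lborel)"
  proof -
    have "(\<integral>x. (v x - v x0) * atom \<Theta> l k x \<partial>lborel)
        = (\<integral>x. v x * atom \<Theta> l k x - v x0 * atom \<Theta> l k x \<partial>lborel)"
      by (simp add: algebra_simps)
    also have "\<dots> = (\<integral>x. v x * atom \<Theta> l k x \<partial>lborel) - v x0 * (\<integral>x. atom \<Theta> l k x \<partial>lborel)"
      using iv ia by simp
    finally show ?thesis using ia0 by simp
  qed
  also have "\<bar>\<dots>\<bar> \<le> (\<integral>x. L * B / 2 ^ l * atom (\<lambda>y. \<bar>\<Theta> y\<bar>) l k x \<partial>lborel)"
  proof (rule integral_abs_bound_integral)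
    have "continuous_on UNIV (\<lambda>x. v x - v x0)" using vc by (intro continuous_intros)
    then show "integrable lborel (\<lambda>x. (v x - v x0) * atom \<Theta> l k x)"
      by (rule csf_integrable_cont[OF acs])
    show "integrable lborel (\<lambda>x. L * B / 2 ^ l * atom (\<lambda>y. \<bar>\<Theta> y\<bar>) l k x)"
      using iaa by simp
    fix x :: "real^'n"
    show "\<bar>(v x - v x0) * atom \<Theta> l k x\<bar> \<le> L * B / 2 ^ l * atom (\<lambda>y. \<bar>\<Theta> y\<bar>) l k x"
    proof (cases "atom \<Theta> l k x = 0")
      case True then show ?thesis using atom_abs[of \<Theta> l k x] by simp
    next
      case False
      have s: "norm (2 ^ l *\<^sub>R x - int_vec k) \<le> B" by (rule atom_support[OF cs False])
      have "2 ^ l *\<^sub>R x - int_vec k = 2 ^ l *\<^sub>R (x - x0)"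
        by (simp add: x0_def algebra_simps)
      then have "norm (2 ^ l *\<^sub>R x - int_vec k) = 2 ^ l * dist x x0" by (simp add: dist_norm)
      with s have d: "dist x x0 \<le> B / 2 ^ l" by (simp add: field_simps)
      have "\<bar>v x - v x0\<bar> \<le> L * B / 2 ^ l"
        using lip[of x x0] mult_left_mono[OF d L] by simp
      then have "\<bar>v x - v x0\<bar> * \<bar>atom \<Theta> l k x\<bar> \<le> L * B / 2 ^ l * \<bar>atom \<Theta> l k x\<bar>"
        by (rule mult_right_mono) simp
      then show ?thesis by (simp add: abs_mult atom_abs)
    qed
  qed
  also have "\<dots> = L * B / 2 ^ l * (2 powr (- (real l * real CARD('n) / 2)) * (\<integral>x. \<bar>\<Theta> x\<bar> \<partial>lborel))"
    by (simp add: atom_integral)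
  also have "\<dots> = L * B * 2 powr (- (real l * (real CARD('n) / 2 + 1))) * (\<integral>x. \<bar>\<Theta> x\<bar> \<partial>lborel)"
  proof -
    have e: "- (real l * (real CARD('n) / 2 + 1)) = - (real l * real CARD('n) / 2) - real l"
      by (simp add: algebra_simps)
    have "2 powr (- (real l * (real CARD('n) / 2 + 1))) = 2 powr (- (real l * real CARD('n) / 2)) / 2 powr real l"
      by (simp only: e powr_diff)
    also have "(2::real) powr real l = 2 ^ l" by (simp add: powr_realpow)
    finally show ?thesis by simp
  qed
  finally show ?thesis .
qed

definition boxN :: "real \<Rightarrow> nat" where
  "boxN B = nat (2 * \<lceil>B\<rceil> + 1) ^ CARD('n::finite)"

lemma lattice_box:
  fixes y :: "real^'n::finite"
  assumes "0 \<le> B"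
  shows "finite {k. norm (y - int_vec k) \<le> B}" "card {k. norm (y - int_vec k) \<le> B} \<le> boxN TYPE('n) B"
proof -
  define T where "T i = {\<lceil>y$i - B\<rceil> .. \<lceil>y$i - B\<rceil> + 2 * \<lceil>B\<rceil>}" for i
  have sub: "{k. norm (y - int_vec k) \<le> B} \<subseteq> PiE UNIV T"
  proof
    fix k assume "k \<in> {k. norm (y - int_vec k) \<le> B}"
    then have n: "norm (y - int_vec k) \<le> B" by simp
    have "k i \<in> T i" for i
    proof -
      have "\<bar>y$i - real_of_int (k i)\<bar> \<le> B"
        using component_le_norm_cart[of "y - int_vec k" i] n by (simp add: int_vec_def)
      then have a: "y$i - B \<le> k i" and b: "k i \<le> y$i + B" by auto
      from a have "\<lceil>y$i - B\<rceil> \<le> k i" by (simp add: ceiling_le_iff)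
      moreover have "real_of_int (k i) \<le> real_of_int (\<lceil>y$i - B\<rceil> + 2 * \<lceil>B\<rceil>)"
        using b le_of_int_ceiling[of "y$i - B"] le_of_int_ceiling[of B] by linarith
      ultimately show ?thesis unfolding T_def by (simp only: atLeastAtMost_iff of_int_le_iff)
    qed
    then show "k \<in> PiE UNIV T" by (auto simp: PiE_def extensional_def)
  qed
  have fin: "finite (PiE UNIV T)" by (rule finite_PiE) (auto simp: T_def)
  show "finite {k. norm (y - int_vec k) \<le> B}" by (rule finite_subset[OF sub fin])
  have "card {k. norm (y - int_vec k) \<le> B} \<le> card (PiE UNIV T)" by (rule card_mono[OF fin sub])
  also have "\<dots> = (\<Prod>i\<in>UNIV. card (T i))" by (simp add: card_PiE)
  also have "\<dots> = boxN TYPE('n) B" by (simp add: T_def boxN_def)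
  finally show "card {k. norm (y - int_vec k) \<le> B} \<le> boxN TYPE('n) B" .
qed

lemma atom_overlap:
  fixes \<Theta> :: "real^'n::finite \<Rightarrow> real"
  assumes cs: "csf \<Theta> B" and M: "\<And>y. \<bar>\<Theta> y\<bar> \<le> M" and F: "finite F"
    and g: "\<And>k. 0 \<le> g k" and G0: "0 \<le> G" and G: "\<And>k. atom \<Theta> l k x \<noteq> 0 \<Longrightarrow> g k \<le> G"
  shows "(\<Sum>k\<in>F. g k * \<bar>atom \<Theta> l k x\<bar>) \<le> real (boxN TYPE('n) B) * (G * (2 powr (real l * real CARD('n) / 2) * M))"
proof -
  have B: "0 \<le> B" using cs by (simp add: csf_def)
  define K where "K = {k. norm (2 ^ l *\<^sub>R x - int_vec k) \<le> B}"
  have K: "finite K" "card K \<le> boxN TYPE('n) B" using lattice_box[OF B] unfolding K_def by auto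
  have M0: "0 \<le> M" using M[of 0] by linarith
  have "(\<Sum>k\<in>F. g k * \<bar>atom \<Theta> l k x\<bar>) = (\<Sum>k\<in>F \<inter> K. g k * \<bar>atom \<Theta> l k x\<bar>)"
    using F by (intro sum.mono_neutral_right) (auto simp: K_def dest: atom_support[OF cs])
  also have "\<dots> \<le> (\<Sum>k\<in>K. g k * \<bar>atom \<Theta> l k x\<bar>)"
    using K g by (intro sum_mono2) auto
  also have "\<dots> \<le> (\<Sum>k\<in>K. G * (2 powr (real l * real CARD('n) / 2) * M))"
  proof (rule sum_mono)
    fix k assume "k \<in> K"
    show "g k * \<bar>atom \<Theta> l k x\<bar> \<le> G * (2 powr (real l * real CARD('n) / 2) * M)"
    proof (cases "atom \<Theta> l k x = 0")
      case True
      then show ?thesis using G0 M0 by simp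
    next
      case False
      have "\<bar>atom \<Theta> l k x\<bar> \<le> 2 powr (real l * real CARD('n) / 2) * M"
        unfolding atom_def abs_mult using M[of "2 ^ l *\<^sub>R x - int_vec k"] by (simp add: mult_left_mono)
      then show ?thesis using G[OF False] g[of k] by (intro mult_mono) auto
    qed
  qed
  also have "\<dots> = real (card K) * (G * (2 powr (real l * real CARD('n) / 2) * M))" by simp
  also have "\<dots> \<le> real (boxN TYPE('n) B) * (G * (2 powr (real l * real CARD('n) / 2) * M))"
  proof (rule mult_right_mono)
    show "real (card K) \<le> real (boxN TYPE('n) B)" using K by simp
    show "0 \<le> G * (2 powr (real l * real CARD('n) / 2) * M)" using M0 G0 by simp
  qed
  finally show ?thesis .
qed

lemma csf_tensor:
  fixes f :: "'n::finite \<Rightarrow> real \<Rightarrow> real"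
  assumes cs: "\<And>i. csf (f i) B0"
  shows "csf (\<lambda>y::real^'n. \<Prod>i\<in>UNIV. f i (y$i)) (real CARD('n) * B0)"
  unfolding csf_def
proof (intro conjI allI impI)
  have B0: "0 \<le> B0" using cs unfolding csf_def by blast
  show "continuous_on UNIV (\<lambda>y::real^'n. \<Prod>i\<in>UNIV. f i (y$i))"
  proof (rule continuous_on_prod)
    fix i
    have c: "continuous_on UNIV (f i)" using cs unfolding csf_def by blast
    show "continuous_on UNIV (\<lambda>y::real^'n. f i (y$i))"
      by (rule continuous_on_compose2[OF c continuous_on_component]) auto
  qed
  show "0 \<le> real CARD('n) * B0" using B0 by simp
  fix y :: "real^'n" assume y: "real CARD('n) * B0 < norm y"
  have "\<exists>i. B0 < \<bar>y$i\<bar>"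
  proof (rule ccontr)
    assume "\<not> (\<exists>i. B0 < \<bar>y$i\<bar>)"
    then have "(\<Sum>i\<in>UNIV. \<bar>y$i\<bar>) \<le> (\<Sum>i\<in>(UNIV::'n set). B0)" by (intro sum_mono) (simp add: not_less)
    then have "norm y \<le> real CARD('n) * B0" using norm_le_l1_cart[of y] by simp
    with y show False by simp
  qed
  then obtain i where i: "B0 < \<bar>y$i\<bar>" by blast
  then have "f i (y$i) = 0" using cs[of i] unfolding csf_def by (simp add: real_norm_def)
  then show "(\<Prod>i\<in>UNIV. f i (y$i)) = 0" by (metis UNIV_I finite prod_zero_iff)
qed

lemma tensor_bound:
  fixes f :: "'n::finite \<Rightarrow> real \<Rightarrow> real"
  assumes "\<And>i t. \<bar>f i t\<bar> \<le> m"
  shows "\<bar>\<Prod>i\<in>UNIV. f i (y$i)\<bar> \<le> m ^ CARD('n)"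
proof -
  have "\<bar>\<Prod>i\<in>UNIV. f i (y$i)\<bar> = (\<Prod>i\<in>UNIV. \<bar>f i (y$i)\<bar>)" by (simp add: abs_prod)
  also have "\<dots> \<le> (\<Prod>i\<in>(UNIV::'n set). m)" by (intro prod_mono) (simp add: assms)
  finally show ?thesis by simp
qed

definition Phi :: "(real \<Rightarrow> real) \<Rightarrow> real^'n::finite \<Rightarrow> real" where
  "Phi \<phi>0 y = (\<Prod>i\<in>UNIV. \<phi>0 (y$i))"

lemma phi_k_atom: "phi_k \<phi>0 k = atom (Phi \<phi>0) 0 k"
  by (simp add: fun_eq_iff phi_k_def atom_def Phi_def int_vec_def)

lemma psi_lk_atom: "psi_lk \<phi>0 \<psi>0 l \<iota> k = atom (psi_type \<phi>0 \<psi>0 \<iota>) l k"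
  by (simp add: fun_eq_iff psi_lk_def atom_def)

lemma wb_basic:
  assumes "wavelet_basis TYPE('n::finite) S \<phi>0 \<psi>0"
  obtains B0 m where "csf \<phi>0 B0" "csf \<psi>0 B0" "\<And>t. \<bar>\<phi>0 t\<bar> \<le> m" "\<And>t. \<bar>\<psi>0 t\<bar> \<le> m"
     "is_ONB (wsys \<phi>0 \<psi>0 :: _ \<Rightarrow> real^'n \<Rightarrow> real) wsys_index"
proof -
  have w: "C_reg S \<phi>0" "C_reg S \<psi>0" "compact_supp \<phi>0" "compact_supp \<psi>0"
       "is_ONB (wsys \<phi>0 \<psi>0 :: _ \<Rightarrow> real^'n \<Rightarrow> real) wsys_index"
    using assms unfolding wavelet_basis_def by auto
  have c1: "continuous_on UNIV \<phi>0" using w(1) unfolding C_reg_def by (metis funpow_0 le0)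
  have c2: "continuous_on UNIV \<psi>0" using w(2) unfolding C_reg_def by (metis funpow_0 le0)
  obtain a1 where a1: "\<forall>x. a1 < \<bar>x\<bar> \<longrightarrow> \<phi>0 x = 0" using w(3) unfolding compact_supp_def by blast
  obtain a2 where a2: "\<forall>x. a2 < \<bar>x\<bar> \<longrightarrow> \<psi>0 x = 0" using w(4) unfolding compact_supp_def by blast
  define B0 where "B0 = max 0 (max a1 a2)"
  have cs1: "csf \<phi>0 B0" unfolding csf_def B0_def using c1 a1 by auto
  have cs2: "csf \<psi>0 B0" unfolding csf_def B0_def using c2 a2 by auto
  obtain m1 where m1: "\<forall>t. \<bar>\<phi>0 t\<bar> \<le> m1" using csf_bounded[OF cs1] by blast
  obtain m2 where m2: "\<forall>t. \<bar>\<psi>0 t\<bar> \<le> m2" using csf_bounded[OF cs2] by blast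
  show ?thesis
    by (rule that[OF cs1 cs2, of "max m1 m2"]) (use m1 m2 w(5) in \<open>auto intro: max.coboundedI1 max.coboundedI2 order_trans\<close>)
qed

lemma csf_Phi: "csf \<phi>0 B0 \<Longrightarrow> csf (Phi \<phi>0 :: real^'n::finite \<Rightarrow> real) (real CARD('n) * B0)"
  unfolding Phi_def[abs_def] by (rule csf_tensor)

lemma csf_Psi: "csf \<phi>0 B0 \<Longrightarrow> csf \<psi>0 B0 \<Longrightarrow> csf (psi_type \<phi>0 \<psi>0 \<iota> :: real^'n::finite \<Rightarrow> real) (real CARD('n) * B0)"
  unfolding psi_type_def[abs_def] by (rule csf_tensor) auto

lemma bound_Phi: "(\<And>t. \<bar>\<phi>0 t\<bar> \<le> m) \<Longrightarrow> \<bar>Phi \<phi>0 (y::real^'n::finite)\<bar> \<le> m ^ CARD('n)"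
  unfolding Phi_def by (rule tensor_bound)

lemma bound_Psi: "(\<And>t. \<bar>\<phi>0 t\<bar> \<le> m) \<Longrightarrow> (\<And>t. \<bar>\<psi>0 t\<bar> \<le> m) \<Longrightarrow> \<bar>psi_type \<phi>0 \<psi>0 \<iota> (y::real^'n::finite)\<bar> \<le> m ^ CARD('n)"
  unfolding psi_type_def by (rule tensor_bound) auto

lemma wsys_Inl: "wsys \<phi>0 \<psi>0 (Inl k) = atom (Phi \<phi>0) 0 k"
  by (simp add: wsys_def phi_k_atom)

lemma wsys_Inr: "wsys \<phi>0 \<psi>0 (Inr (l, \<iota>, k)) = atom (psi_type \<phi>0 \<psi>0 \<iota>) l k"
  by (simp add: wsys_def psi_lk_atom)

lemma in_wsys_index: "Inl k \<in> wsys_index" "\<iota> \<in> wtypes \<Longrightarrow> Inr (l, \<iota>, k) \<in> wsys_index"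
  by (auto simp: wsys_index_def)

lemma geom_half_le: "finite L \<Longrightarrow> (\<Sum>l\<in>L. (1/2::real) ^ l) \<le> 2"
proof -
  assume L: "finite L"
  obtain n where "L \<subseteq> {..<n}" using L by (meson finite_nat_iff_bounded)
  then have "(\<Sum>l\<in>L. (1/2::real) ^ l) \<le> (\<Sum>l<n. (1/2::real) ^ l)" by (intro sum_mono2) auto
  also have "\<dots> = 2 - 2 * (1/2) ^ n" by (induction n) (auto simp: field_simps)
  also have "\<dots> \<le> 2" by simp
  finally show ?thesis .
qed

lemma has_sum_abs_le:
  fixes p :: "'a \<Rightarrow> real"
  assumes "(p has_sum s) A" and "\<And>F. finite F \<Longrightarrow> F \<subseteq> A \<Longrightarrow> \<bar>sum p F\<bar> \<le> X"
  shows "\<bar>s\<bar> \<le> X"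
proof -
  have "((\<lambda>F. \<bar>sum p F\<bar>) \<longlongrightarrow> \<bar>s\<bar>) (finite_subsets_at_top A)"
    using assms(1) unfolding has_sum_def by (rule tendsto_rabs)
  moreover have "eventually (\<lambda>F. \<bar>sum p F\<bar> \<le> X) (finite_subsets_at_top A)"
    using assms(2) by auto
  ultimately show ?thesis by (intro tendsto_upperbound) auto
qed

lemma split_sum_Plus:
  fixes F :: "('a + 'b) set"
  assumes "finite F"
  shows "sum g F = sum (\<lambda>k. g (Inl k)) (Inl -` F) + sum (\<lambda>k. g (Inr k)) (Inr -` F)"
proof -
  have e: "F = (Inl -` F) <+> (Inr -` F)"
  proof (rule set_eqI)
    fix a show "a \<in> F \<longleftrightarrow> a \<in> (Inl -` F) <+> (Inr -` F)" by (cases a) auto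
  qed
  have f: "finite (Inl -` F)" "finite (Inr -` F)"
    using assms by (auto intro: finite_vimageI inj_onI)
  show ?thesis by (subst e, subst sum.Plus[OF f]) (simp add: o_def)
qed

definition om :: "real \<Rightarrow> (('n::finite \<Rightarrow> int) + (nat \<times> ('n \<Rightarrow> bool) \<times> ('n \<Rightarrow> int))) \<Rightarrow> real" where
  "om s a = (case a of Inl k \<Rightarrow> 1 + s * norm (int_vec k)
           | Inr (l, \<iota>, k) \<Rightarrow> 2 powr (- (real l * (real CARD('n) / 2 + 1))))"

lemma om_nonneg: "0 \<le> s \<Longrightarrow> 0 \<le> om s a"
  by (auto simp: om_def split: sum.splits prod.splits)

lemma weight_identity:
  "2 powr (- (real l * (real CARD('n) / 2 + 1))) * (2 powr (real l * real CARD('n) / 2) * M) = (1/2) ^ l * M"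
proof -
  have "2 powr (- (real l * (real CARD('n) / 2 + 1))) * 2 powr (real l * real CARD('n) / 2) = 2 powr (- real l)"
    by (simp add: powr_add[symmetric] algebra_simps)
  also have "\<dots> = (1/2) ^ l" by (simp add: powr_minus powr_realpow power_one_over inverse_eq_divide)
  finally show ?thesis by (metis mult.assoc)
qed

lemma pointwise_bound:
  fixes x :: "real^'n::finite"
  assumes c1: "csf \<phi>0 B0" and c2: "csf \<psi>0 B0" and m1: "\<And>t. \<bar>\<phi>0 t\<bar> \<le> m" and m2: "\<And>t. \<bar>\<psi>0 t\<bar> \<le> m"
    and F: "finite F" and s0: "0 \<le> s" and s1: "s \<le> 1"
  shows "(\<Sum>a\<in>F. om s a * \<bar>wsys \<phi>0 \<psi>0 a x\<bar>)
    \<le> (real (boxN TYPE('n) (real CARD('n) * B0)) * m ^ CARD('n) * (1 + real CARD('n) * B0)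
        + 2 * real CARD('n \<Rightarrow> bool) * real (boxN TYPE('n) (real CARD('n) * B0)) * m ^ CARD('n)) * (1 + s * norm x)"
proof -
  define B where "B = real CARD('n) * B0"
  define N where "N = real (boxN TYPE('n) B)"
  define M where "M = m ^ CARD('n)"
  have B0: "0 \<le> B" using c1 by (simp add: csf_def B_def)
  have N0: "0 \<le> N" by (simp add: N_def)
  have m0: "0 \<le> m" using m1[of 0] by linarith
  have M0: "0 \<le> M" using m0 by (simp add: M_def)
  have csP: "csf (Phi \<phi>0 :: real^'n \<Rightarrow> real) B" using csf_Phi[OF c1] by (simp add: B_def)
  have csS: "csf (psi_type \<phi>0 \<psi>0 \<iota> :: real^'n \<Rightarrow> real) B" for \<iota> using csf_Psi[OF c1 c2] by (simp add: B_def)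
  have bP: "\<bar>Phi \<phi>0 y\<bar> \<le> M" for y :: "real^'n" using bound_Phi[OF m1] by (simp add: M_def)
  have bS: "\<bar>psi_type \<phi>0 \<psi>0 \<iota> y\<bar> \<le> M" for \<iota> and y :: "real^'n" using bound_Psi[OF m1 m2] by (simp add: M_def)
  define F1 where "F1 = Inl -` F"
  define F2 where "F2 = Inr -` F"
  have fF1: "finite F1" using F unfolding F1_def by (auto intro: finite_vimageI inj_onI)
  have fF2: "finite F2" using F unfolding F2_def by (auto intro: finite_vimageI inj_onI)
  have "(\<Sum>a\<in>F. om s a * \<bar>wsys \<phi>0 \<psi>0 a x\<bar>)
      = (\<Sum>k\<in>F1. (1 + s * norm (int_vec k)) * \<bar>atom (Phi \<phi>0) 0 k x\<bar>)
        + (\<Sum>p\<in>F2. 2 powr (- (real (fst p) * (real CARD('n) / 2 + 1))) * \<bar>atom (psi_type \<phi>0 \<psi>0 (fst (snd p))) (fst p) (snd (snd p)) x\<bar>)"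
    unfolding F1_def F2_def by (subst split_sum_Plus[OF F]) (simp add: om_def wsys_Inl wsys_Inr split_def wsys_def psi_lk_atom phi_k_atom)
  also have "(\<Sum>k\<in>F1. (1 + s * norm (int_vec k)) * \<bar>atom (Phi \<phi>0) 0 k x\<bar>) \<le> N * ((1 + s * (norm x + B)) * (2 powr (real 0 * real CARD('n) / 2) * M))"
    unfolding N_def
  proof (rule atom_overlap[OF csP bP fF1])
    show "0 \<le> 1 + s * norm (int_vec k)" for k :: "'n \<Rightarrow> int" using s0 by simp
    show "0 \<le> 1 + s * (norm x + B)" using B0 s0 by simp
    fix k assume "atom (Phi \<phi>0) 0 k x \<noteq> 0"
    from atom_support[OF csP this] have "norm (x - int_vec k) \<le> B" by simp
    moreover have "norm (int_vec k) \<le> norm x + norm (x - int_vec k)" by (metis norm_triangle_sub add.commute norm_minus_commute)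
    ultimately have "norm (int_vec k) \<le> norm x + B" by simp
    then show "1 + s * norm (int_vec k) \<le> 1 + s * (norm x + B)" using s0 by (simp add: mult_left_mono)
  qed
  also have "(\<Sum>p\<in>F2. 2 powr (- (real (fst p) * (real CARD('n) / 2 + 1))) * \<bar>atom (psi_type \<phi>0 \<psi>0 (fst (snd p))) (fst p) (snd (snd p)) x\<bar>)
     \<le> 2 * real CARD('n \<Rightarrow> bool) * N * M"
  proof -
    define Ls where "Ls = fst ` F2"
    define Ks where "Ks = (snd \<circ> snd) ` F2"
    let ?h = "\<lambda>p. 2 powr (- (real (fst p) * (real CARD('n) / 2 + 1))) * \<bar>atom (psi_type \<phi>0 \<psi>0 (fst (snd p))) (fst p) (snd (snd p)) x\<bar>"
    have sub: "F2 \<subseteq> Ls \<times> (UNIV \<times> Ks)" unfolding Ls_def Ks_def by force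
    have fin: "finite (Ls \<times> ((UNIV::('n\<Rightarrow>bool) set) \<times> Ks))"
    proof -
      have fU: "finite (UNIV::('n\<Rightarrow>bool) set)" by simp
      show ?thesis using fF2 fU unfolding Ls_def Ks_def by (intro finite_cartesian_product finite_imageI) auto
    qed
    have "sum ?h F2 \<le> sum ?h (Ls \<times> (UNIV \<times> Ks))" by (rule sum_mono2[OF fin sub]) simp
    also have "\<dots> = (\<Sum>l\<in>Ls. \<Sum>\<iota>\<in>UNIV. \<Sum>k\<in>Ks. ?h (l, \<iota>, k))"
      by (simp add: sum.cartesian_product split_def)
    also have "\<dots> \<le> (\<Sum>l\<in>Ls. \<Sum>\<iota>\<in>(UNIV::('n\<Rightarrow>bool) set). N * ((1/2) ^ l * M))"
    proof (intro sum_mono)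
      fix l \<iota>
      have "(\<Sum>k\<in>Ks. 2 powr (- (real l * (real CARD('n) / 2 + 1))) * \<bar>atom (psi_type \<phi>0 \<psi>0 \<iota>) l k x\<bar>)
         \<le> N * (2 powr (- (real l * (real CARD('n) / 2 + 1))) * (2 powr (real l * real CARD('n) / 2) * M))"
        unfolding N_def by (rule atom_overlap[OF csS bS]) (use fF2 in \<open>auto simp: Ks_def\<close>)
      then show "(\<Sum>k\<in>Ks. ?h (l, \<iota>, k)) \<le> N * ((1/2) ^ l * M)" by (simp add: weight_identity)
    qed
    also have "\<dots> = real CARD('n \<Rightarrow> bool) * N * M * (\<Sum>l\<in>Ls. (1/2) ^ l)"
      by (simp add: sum_distrib_left sum_distrib_right algebra_simps)
    also have "\<dots> \<le> real CARD('n \<Rightarrow> bool) * N * M * 2"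
      using N0 M0 geom_half_le[of Ls] fF2 unfolding Ls_def by (intro mult_left_mono) auto
    finally show ?thesis by simp
  qed
  also have "N * ((1 + s * (norm x + B)) * (2 powr (real 0 * real CARD('n) / 2) * M)) + 2 * real CARD('n \<Rightarrow> bool) * N * M
      \<le> (N * M * (1 + B) + 2 * real CARD('n \<Rightarrow> bool) * N * M) * (1 + s * norm x)"
  proof -
    have "N * ((1 + s * (norm x + B)) * M) \<le> N * M * (1 + B) * (1 + s * norm x)"
    proof -
      have "s * B \<le> 1 * B" using s1 B0 by (rule mult_right_mono)
      then have "s * B \<le> B" by simp
      moreover have "0 \<le> B * (s * norm x)" using s0 B0 by simp
      ultimately have "1 + s * (norm x + B) \<le> (1 + B) * (1 + s * norm x)" by (simp add: algebra_simps)
      then have "(1 + s * (norm x + B)) * (N * M) \<le> (1 + B) * (1 + s * norm x) * (N * M)"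
        using N0 M0 by (intro mult_right_mono) auto
      then show ?thesis by (simp add: algebra_simps)
    qed
    moreover have "2 * real CARD('n \<Rightarrow> bool) * N * M \<le> 2 * real CARD('n \<Rightarrow> bool) * N * M * (1 + s * norm x)"
      using N0 M0 s0 by (simp add: algebra_simps)
    ultimately show ?thesis by (simp add: algebra_simps)
  qed
  finally show ?thesis by (simp add: N_def M_def B_def)
qed

definition Kpw :: "'n::finite itself \<Rightarrow> real \<Rightarrow> real \<Rightarrow> real" where
  "Kpw _ B0 m = real (boxN TYPE('n) (real CARD('n) * B0)) * m ^ CARD('n) * (1 + real CARD('n) * B0)
        + 2 * real CARD('n \<Rightarrow> bool) * real (boxN TYPE('n) (real CARD('n) * B0)) * m ^ CARD('n)"

lemma wsys_csf:
  assumes c1: "csf \<phi>0 B0" and c2: "csf \<psi>0 B0"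
  shows "\<exists>B. csf (wsys \<phi>0 \<psi>0 a :: real^'n::finite \<Rightarrow> real) B"
proof (cases a)
  case (Inl k) then show ?thesis using atom_csf[OF csf_Phi[OF c1]] by (auto simp: wsys_Inl)
next
  case (Inr p) then obtain l \<iota> k where "a = Inr (l, \<iota>, k)" by (metis prod_cases3)
  then show ?thesis using atom_csf[OF csf_Psi[OF c1 c2]] by (auto simp: wsys_Inr)
qed

lemma wsys_meas:
  assumes c1: "csf \<phi>0 B0" and c2: "csf \<psi>0 B0"
  shows "(wsys \<phi>0 \<psi>0 a :: real^'n::finite \<Rightarrow> real) \<in> borel_measurable lborel"
  using wsys_csf[OF c1 c2, of a] csf_measurable by auto

lemma coef_sum_bound:
  fixes v :: "real^'n::finite \<Rightarrow> real"
  assumes c1: "csf \<phi>0 B0" and c2: "csf \<psi>0 B0" and m1: "\<And>t. \<bar>\<phi>0 t\<bar> \<le> m" and m2: "\<And>t. \<bar>\<psi>0 t\<bar> \<le> m"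
    and v: "v \<in> borel_measurable lborel" and F: "finite F" and s0: "0 \<le> s" and s1: "s \<le> 1"
  shows "(\<Sum>a\<in>F. ennreal (om s a * \<bar>wip v (wsys \<phi>0 \<psi>0 a)\<bar>))
     \<le> ennreal (Kpw TYPE('n) B0 m) * (\<integral>\<^sup>+x. ennreal ((1 + s * norm x) * \<bar>v x\<bar>) \<partial>lborel)"
proof -
  let ?b = "\<lambda>a. wsys \<phi>0 \<psi>0 a :: real^'n \<Rightarrow> real"
  have mb: "\<And>a. ?b a \<in> borel_measurable lborel" by (rule wsys_meas[OF c1 c2])
  have "(\<Sum>a\<in>F. ennreal (om s a * \<bar>wip v (?b a)\<bar>))
      \<le> (\<Sum>a\<in>F. ennreal (om s a) * (\<integral>\<^sup>+x. ennreal \<bar>v x * ?b a x\<bar> \<partial>lborel))"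
  proof (rule sum_mono)
    fix a
    have "ennreal (om s a * \<bar>wip v (?b a)\<bar>) = ennreal (om s a) * ennreal \<bar>wip v (?b a)\<bar>"
      by (simp add: ennreal_mult om_nonneg[OF s0])
    also have "\<dots> \<le> ennreal (om s a) * (\<integral>\<^sup>+x. ennreal \<bar>v x * ?b a x\<bar> \<partial>lborel)"
      unfolding wip_def by (intro mult_left_mono coef_bound_ennreal) simp
    finally show "ennreal (om s a * \<bar>wip v (?b a)\<bar>) \<le> ennreal (om s a) * (\<integral>\<^sup>+x. ennreal \<bar>v x * ?b a x\<bar> \<partial>lborel)" .
  qed
  also have "\<dots> = (\<Sum>a\<in>F. (\<integral>\<^sup>+x. ennreal (om s a * \<bar>v x * ?b a x\<bar>) \<partial>lborel))"
  proof (rule sum.cong[OF refl])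
    fix a
    have "(\<integral>\<^sup>+x. ennreal (om s a * \<bar>v x * ?b a x\<bar>) \<partial>lborel) = (\<integral>\<^sup>+x. ennreal (om s a) * ennreal \<bar>v x * ?b a x\<bar> \<partial>lborel)"
      by (simp add: ennreal_mult om_nonneg[OF s0])
    also have "\<dots> = ennreal (om s a) * (\<integral>\<^sup>+x. ennreal \<bar>v x * ?b a x\<bar> \<partial>lborel)"
      using v mb[of a] by (intro nn_integral_cmult) auto
    finally show "ennreal (om s a) * (\<integral>\<^sup>+x. ennreal \<bar>v x * ?b a x\<bar> \<partial>lborel) = (\<integral>\<^sup>+x. ennreal (om s a * \<bar>v x * ?b a x\<bar>) \<partial>lborel)" by simp
  qed
  also have "\<dots> = (\<integral>\<^sup>+x. (\<Sum>a\<in>F. ennreal (om s a * \<bar>v x * ?b a x\<bar>)) \<partial>lborel)"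
    using v mb by (intro nn_integral_sum[symmetric]) auto
  also have "\<dots> \<le> (\<integral>\<^sup>+x. ennreal (Kpw TYPE('n) B0 m) * ennreal ((1 + s * norm x) * \<bar>v x\<bar>) \<partial>lborel)"
  proof (rule nn_integral_mono)
    fix x :: "real^'n"
    have e1: "(\<Sum>a\<in>F. ennreal (om s a * \<bar>v x * ?b a x\<bar>)) = ennreal (\<Sum>a\<in>F. om s a * \<bar>v x * ?b a x\<bar>)"
      by (rule sum_ennreal) (simp add: om_nonneg[OF s0])
    have e2: "(\<Sum>a\<in>F. om s a * \<bar>v x * ?b a x\<bar>) = \<bar>v x\<bar> * (\<Sum>a\<in>F. om s a * \<bar>?b a x\<bar>)"
      by (simp add: sum_distrib_left abs_mult algebra_simps)
    have e3: "\<bar>v x\<bar> * (\<Sum>a\<in>F. om s a * \<bar>?b a x\<bar>) \<le> \<bar>v x\<bar> * (Kpw TYPE('n) B0 m * (1 + s * norm x))"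
      using pointwise_bound[OF c1 c2 m1 m2 F s0 s1, of x] by (intro mult_left_mono) (auto simp: Kpw_def)
    have h: "(\<Sum>a\<in>F. ennreal (om s a * \<bar>v x * ?b a x\<bar>)) \<le> ennreal (\<bar>v x\<bar> * (Kpw TYPE('n) B0 m * (1 + s * norm x)))"
      unfolding e1 e2 by (rule ennreal_leI[OF e3])
      have eq: "\<bar>v x\<bar> * (Kpw TYPE('n) B0 m * (1 + s * norm x)) = Kpw TYPE('n) B0 m * ((1 + s * norm x) * \<bar>v x\<bar>)" by simp
      have le2: "ennreal (Kpw TYPE('n) B0 m * ((1 + s * norm x) * \<bar>v x\<bar>)) \<le> ennreal (Kpw TYPE('n) B0 m) * ennreal ((1 + s * norm x) * \<bar>v x\<bar>)"
      proof (cases "Kpw TYPE('n) B0 m \<ge> 0")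
        case True
        have "0 \<le> (1 + s * norm x) * \<bar>v x\<bar>" using s0 by simp
        then show ?thesis using True by (simp add: ennreal_mult)
      next
        case False
        then have "Kpw TYPE('n) B0 m * ((1 + s * norm x) * \<bar>v x\<bar>) \<le> 0"
          using s0 by (intro mult_nonpos_nonneg) auto
        then show ?thesis by (simp add: ennreal_neg)
      qed
      show "(\<Sum>a\<in>F. ennreal (om s a * \<bar>v x * ?b a x\<bar>)) \<le> ennreal (Kpw TYPE('n) B0 m) * ennreal ((1 + s * norm x) * \<bar>v x\<bar>)"
        using order_trans[OF h[unfolded eq] le2] .
  qed
  also have "\<dots> = ennreal (Kpw TYPE('n) B0 m) * (\<integral>\<^sup>+x. ennreal ((1 + s * norm x) * \<bar>v x\<bar>) \<partial>lborel)"
    using v by (intro nn_integral_cmult) auto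
  finally show ?thesis .
qed

lemma ortho_sum_sq:
  fixes f :: "'i \<Rightarrow> 'a::euclidean_space \<Rightarrow> real"
  assumes I: "finite I" and int: "\<And>p q. p \<in> I \<Longrightarrow> q \<in> I \<Longrightarrow> integrable lborel (\<lambda>x. f p x * f q x)"
    and on: "\<And>p q. p \<in> I \<Longrightarrow> q \<in> I \<Longrightarrow> (\<integral>x. f p x * f q x \<partial>lborel) = (if p = q then 1 else 0)"
  shows "(\<integral>x. (\<Sum>p\<in>I. c p * f p x)\<^sup>2 \<partial>lborel) = (\<Sum>p\<in>I. (c p)\<^sup>2)"
proof -
  have "(\<lambda>x. (\<Sum>p\<in>I. c p * f p x)\<^sup>2) = (\<lambda>x. \<Sum>p\<in>I. \<Sum>q\<in>I. c p * c q * (f p x * f q x))"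
    by (simp add: power2_eq_square sum_product algebra_simps)
  then have "(\<integral>x. (\<Sum>p\<in>I. c p * f p x)\<^sup>2 \<partial>lborel) = (\<integral>x. (\<Sum>p\<in>I. \<Sum>q\<in>I. c p * c q * (f p x * f q x)) \<partial>lborel)"
    by simp
  also have "\<dots> = (\<Sum>p\<in>I. \<integral>x. (\<Sum>q\<in>I. c p * c q * (f p x * f q x)) \<partial>lborel)"
    using int by (intro Bochner_Integration.integral_sum) (auto intro!: Bochner_Integration.integrable_sum)
  also have "\<dots> = (\<Sum>p\<in>I. \<Sum>q\<in>I. c p * c q * (\<integral>x. f p x * f q x \<partial>lborel))"
    using int by (intro sum.cong refl) (simp add: Bochner_Integration.integral_sum)
  also have "\<dots> = (\<Sum>p\<in>I. \<Sum>q\<in>I. if p = q then c p * c q else 0)"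
    using on by (intro sum.cong refl) auto
  also have "\<dots> = (\<Sum>p\<in>I. (c p)\<^sup>2)"
    using I by (simp add: power2_eq_square)
  finally show ?thesis .
qed

lemma quad_ineq:
  fixes A I V :: real
  assumes "\<And>t. 0 \<le> A - 2 * t * I + t\<^sup>2 * V" "0 \<le> V"
  shows "I\<^sup>2 \<le> V * A"
proof (cases "V = 0")
  case True
  have "I = 0"
  proof (rule ccontr)
    assume "I \<noteq> 0"
    have "0 \<le> A - 2 * ((A + 1) / (2 * I)) * I" using assms(1)[of "(A + 1) / (2 * I)"] True by simp
    also have "\<dots> = -1" using \<open>I \<noteq> 0\<close> by (simp add: field_simps)
    finally show False by simp
  qed
  then show ?thesis using True by simp
next
  case False
  then have V: "V > 0" using assms(2) by simp
  have "0 \<le> A - 2 * (I / V) * I + (I / V)\<^sup>2 * V" by (rule assms(1))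
  also have "\<dots> = A - I\<^sup>2 / V" using V by (simp add: field_simps power2_eq_square)
  finally have "I\<^sup>2 / V \<le> A" by simp
  then show ?thesis using V by (simp add: field_simps mult.commute)
qed

lemma cs_indicator:
  fixes F :: "'a::euclidean_space \<Rightarrow> real"
  assumes F: "integrable lborel F" and F2: "integrable lborel (\<lambda>x. (F x)\<^sup>2)"
    and Q: "Q \<in> sets lborel" "emeasure lborel Q < \<infinity>" and supp: "\<And>x. F x \<noteq> 0 \<Longrightarrow> x \<in> Q"
  shows "(\<integral>x. F x \<partial>lborel)\<^sup>2 \<le> measure lborel Q * (\<integral>x. (F x)\<^sup>2 \<partial>lborel)"
proof (rule quad_ineq)
  show "0 \<le> measure lborel Q" by simp
  fix t :: real
  have iQ: "integrable lborel (indicator Q :: 'a \<Rightarrow> real)" using Q by (intro integrable_real_indicator) auto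
  have pt: "(F x - t * indicator Q x)\<^sup>2 = (F x)\<^sup>2 - 2 * t * F x + t\<^sup>2 * indicator Q x" for x
  proof (cases "x \<in> Q")
    case True then show ?thesis by (simp add: power2_eq_square algebra_simps)
  next
    case False then have "F x = 0" using supp by blast
    then show ?thesis using False by simp
  qed
  have "0 \<le> (\<integral>x. (F x - t * indicator Q x)\<^sup>2 \<partial>lborel)" by simp
  also have "\<dots> = (\<integral>x. (F x)\<^sup>2 - 2 * t * F x + t\<^sup>2 * indicator Q x \<partial>lborel)" by (simp only: pt)
  also have "\<dots> = (\<integral>x. (F x)\<^sup>2 \<partial>lborel) - 2 * t * (\<integral>x. F x \<partial>lborel) + t\<^sup>2 * (\<integral>x. indicator Q x \<partial>lborel)"
    using F F2 iQ by simp
  also have "(\<integral>x. indicator Q x \<partial>lborel) = measure lborel Q" using Q by (simp add: integral_indicator)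
  finally show "0 \<le> (\<integral>x. (F x)\<^sup>2 \<partial>lborel) - 2 * t * (\<integral>x. F x \<partial>lborel) + t\<^sup>2 * measure lborel Q" .
qed

definition Kbox :: "nat \<Rightarrow> nat \<Rightarrow> ('n::finite \<Rightarrow> int) set" where
  "Kbox a l = PiE UNIV (\<lambda>_. {int a .. int a + int (2 ^ l * a) - 1})"

lemma Kbox_finite: "finite (Kbox a l)"
  unfolding Kbox_def by (rule finite_PiE) auto

lemma Kbox_card: "card (Kbox a l :: ('n::finite \<Rightarrow> int) set) = (2 ^ l * a) ^ CARD('n)"
proof -
  have e: "nat (2 ^ l * int a) = 2 ^ l * a" by (metis nat_int of_nat_mult of_nat_numeral of_nat_power)
  show ?thesis unfolding Kbox_def by (simp add: card_PiE e)
qed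

lemma Kbox_mem: "k \<in> Kbox a l \<Longrightarrow> int a \<le> k i \<and> k i \<le> int a + int (2 ^ l * a) - 1"
  unfolding Kbox_def by (auto simp: PiE_def Pi_def)

lemma pw_sq: "(2 powr (- (real l * real CARD('n) / 2)))\<^sup>2 * real ((2 ^ l * a) ^ CARD('n)) = real a ^ CARD('n)"
proof -
  have "(2 powr (- (real l * real CARD('n) / 2)))\<^sup>2 = 2 powr (- (real l * real CARD('n)))"
    by (simp add: power2_eq_square powr_add[symmetric])
  also have "\<dots> = 1 / 2 ^ (l * CARD('n))"
    by (simp add: powr_minus powr_realpow[symmetric] divide_inverse)
  finally have e: "(2 powr (- (real l * real CARD('n) / 2)))\<^sup>2 = 1 / 2 ^ (l * CARD('n))" .
  have "real ((2 ^ l * a) ^ CARD('n)) = 2 ^ (l * CARD('n)) * real a ^ CARD('n)"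
    by (simp add: power_mult_distrib power_mult)
  then show ?thesis using e by simp
qed

lemma sum_pw_sq:
  "(\<Sum>p\<in>Sigma {..<L} (Kbox a :: nat \<Rightarrow> ('n::finite \<Rightarrow> int) set). (2 powr (- (real (fst p) * real CARD('n) / 2)))\<^sup>2) = real L * real a ^ CARD('n)"
proof -
  have "(\<Sum>p\<in>Sigma {..<L} (Kbox a :: nat \<Rightarrow> ('n \<Rightarrow> int) set). (2 powr (- (real (fst p) * real CARD('n) / 2)))\<^sup>2)
      = (\<Sum>l<L. \<Sum>k\<in>(Kbox a l :: ('n \<Rightarrow> int) set). (2 powr (- (real l * real CARD('n) / 2)))\<^sup>2)"
    by (subst sum.Sigma) (auto simp: Kbox_finite split_def)
  also have "\<dots> = (\<Sum>l<L. (2 powr (- (real l * real CARD('n) / 2)))\<^sup>2 * real ((2 ^ l * a) ^ CARD('n)))"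
    by (simp add: Kbox_card mult.commute)
  also have "\<dots> = (\<Sum>l<L. real a ^ CARD('n))" by (simp only: pw_sq)
  finally show ?thesis by simp
qed

lemma psi_support_box:
  fixes \<Psi> :: "real^'n::finite \<Rightarrow> real"
  assumes cs: "csf \<Psi> B" and aB: "B \<le> real a" and k: "k \<in> Kbox a l" and nz: "atom \<Psi> l k x \<noteq> 0"
  shows "x \<in> cbox 0 (\<chi> i. 3 * real a)"
proof -
  have s: "norm (2 ^ l *\<^sub>R x - int_vec k) \<le> B" by (rule atom_support[OF cs nz])
  have "0 \<le> x$i \<and> x$i \<le> 3 * real a" for i
  proof -
    have "\<bar>2 ^ l * x$i - real_of_int (k i)\<bar> \<le> B"
      using component_le_norm_cart[of "2 ^ l *\<^sub>R x - int_vec k" i] s by (simp add: int_vec_def)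
    moreover have ka: "int a \<le> k i" and kb: "k i \<le> int a + int (2 ^ l * a) - 1" using Kbox_mem[OF k] by auto
    have ka': "real_of_int (int a) \<le> real_of_int (k i)" using ka by (simp only: of_int_le_iff)
    have kb': "real_of_int (k i) \<le> real_of_int (int a + int (2 ^ l * a) - 1)" using kb by (simp only: of_int_le_iff)
    have "real a \<le> real_of_int (k i)" "real_of_int (k i) \<le> real a + 2 ^ l * real a"
      using ka' kb' by simp_all
    moreover have "real a \<le> 2 ^ l * real a" by (simp add: mult_le_cancel_right1)
    moreover have "2 ^ l * (3 * real a) = 3 * (2 ^ l * real a)" by simp
    ultimately have "0 \<le> 2 ^ l * x$i" "2 ^ l * x$i \<le> 2 ^ l * (3 * real a)" using aB
      unfolding abs_le_iff by linarith+
    moreover have "(0::real) < 2 ^ l" by simp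
    ultimately show ?thesis by (auto simp: zero_le_mult_iff mult_le_cancel_left_pos)
  qed
  then show ?thesis by (simp add: mem_box_cart)
qed

lemma psi_mean_zero:
  fixes \<Psi> :: "real^'n::finite \<Rightarrow> real"
  assumes cs: "csf \<Psi> B"
    and on: "\<And>l k l' k'. (\<integral>x. atom \<Psi> l k x * atom \<Psi> l' k' x \<partial>lborel) = (if (l, k) = (l', k') then 1 else 0)"
  shows "(\<integral>x. \<Psi> x \<partial>lborel) = 0"
proof -
  define a where "a = nat \<lceil>B\<rceil> + 1"
  have aB: "B \<le> real a" unfolding a_def by linarith
  have a1: "1 \<le> a" unfolding a_def by simp
  define Q :: "(real^'n) set" where "Q = cbox 0 (\<chi> i. 3 * real a)"
  define V where "V = measure lborel Q"
  have Qs: "Q \<in> sets lborel" "emeasure lborel Q < \<infinity>" unfolding Q_def by (auto simp: emeasure_lborel_cbox_finite[unfolded infinity_ennreal_def])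
  define J where "J = (\<integral>x. \<Psi> x \<partial>lborel)"
  have main: "real L * J\<^sup>2 \<le> V" if L1: "1 \<le> L" for L :: nat
  proof -
    define I where "I = Sigma {..<L} (Kbox a :: nat \<Rightarrow> ('n \<Rightarrow> int) set)"
    define c where "c p = 2 powr (- (real (fst p) * real CARD('n) / 2))" for p :: "nat \<times> ('n \<Rightarrow> int)"
    define f where "f p = atom \<Psi> (fst p) (snd p)" for p :: "nat \<times> ('n \<Rightarrow> int)"
    define F where "F x = (\<Sum>p\<in>I. c p * f p x)" for x
    have fI: "finite I" unfolding I_def by (auto simp: Kbox_finite)
    have fcs: "\<exists>R. csf (f p) R" for p unfolding f_def using atom_csf[OF cs] by blast
    have fcont: "continuous_on UNIV (f p)" for p using fcs[of p] by (auto simp: csf_def)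
    have int2: "integrable lborel (\<lambda>x. f p x * f q x)" for p q
      using fcs[of q] fcont[of p] csf_integrable_cont by blast
    have Fcont: "continuous_on UNIV F" unfolding F_def[abs_def]
      by (intro continuous_on_sum continuous_on_mult continuous_on_const fcont)
    have Fsupp: "F x \<noteq> 0 \<Longrightarrow> x \<in> Q" for x
    proof -
      assume "F x \<noteq> 0"
      then obtain p where p: "p \<in> I" "c p * f p x \<noteq> 0" unfolding F_def by (meson sum.neutral)
      then show "x \<in> Q" unfolding Q_def I_def f_def
        using psi_support_box[OF cs aB] by (cases p) auto
    qed
    have cQ: "compact Q" unfolding Q_def by simp
    have iF: "integrable lborel F"
    proof -
      have "integrable lborel (\<lambda>x. indicator Q x *\<^sub>R F x)"
        using cQ Fcont by (intro borel_integrable_compact) (auto intro: continuous_on_subset)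
      also have "(\<lambda>x. indicator Q x *\<^sub>R F x) = F" using Fsupp by (auto simp: fun_eq_iff indicator_def)
      finally show ?thesis .
    qed
    have iF2: "integrable lborel (\<lambda>x. (F x)\<^sup>2)"
    proof -
      have "integrable lborel (\<lambda>x. indicator Q x *\<^sub>R (F x)\<^sup>2)"
        using cQ Fcont by (intro borel_integrable_compact) (auto intro: continuous_on_subset continuous_intros)
      also have "(\<lambda>x. indicator Q x *\<^sub>R (F x)\<^sup>2) = (\<lambda>x. (F x)\<^sup>2)" using Fsupp by (auto simp: fun_eq_iff indicator_def)
      finally show ?thesis .
    qed
    have sq: "(\<integral>x. (F x)\<^sup>2 \<partial>lborel) = real L * real a ^ CARD('n)"
    proof -
      have "(\<integral>x. (F x)\<^sup>2 \<partial>lborel) = (\<Sum>p\<in>I. (c p)\<^sup>2)"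
        unfolding F_def
      proof (rule ortho_sum_sq[OF fI])
        show "integrable lborel (\<lambda>x. f p x * f q x)" for p q by (rule int2)
        fix p q assume "p \<in> I" "q \<in> I"
        show "(\<integral>x. f p x * f q x \<partial>lborel) = (if p = q then 1 else 0)"
          unfolding f_def using on[of "fst p" "snd p" "fst q" "snd q"] by simp
      qed
      also have "\<dots> = real L * real a ^ CARD('n)" unfolding I_def c_def by (rule sum_pw_sq)
      finally show ?thesis .
    qed
    have lin: "(\<integral>x. F x \<partial>lborel) = real L * real a ^ CARD('n) * J"
    proof -
      have "(\<integral>x. F x \<partial>lborel) = (\<Sum>p\<in>I. c p * (\<integral>x. f p x \<partial>lborel))"
        unfolding F_def using fcs by (subst Bochner_Integration.integral_sum) (auto intro: csf_integrable)
      also have "\<dots> = (\<Sum>p\<in>I. (c p)\<^sup>2 * J)"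
        by (intro sum.cong refl) (simp add: f_def c_def atom_integral J_def power2_eq_square)
      also have "\<dots> = (\<Sum>p\<in>I. (c p)\<^sup>2) * J" by (simp add: sum_distrib_right)
      also have "(\<Sum>p\<in>I. (c p)\<^sup>2) = real L * real a ^ CARD('n)" unfolding I_def c_def by (rule sum_pw_sq)
      finally show ?thesis .
    qed
    have "(real L * real a ^ CARD('n) * J)\<^sup>2 \<le> V * (real L * real a ^ CARD('n))"
      using cs_indicator[OF iF iF2 Qs Fsupp] unfolding lin sq V_def by simp
    then have "(real L * real a ^ CARD('n)) * ((real L * real a ^ CARD('n)) * J\<^sup>2) \<le> (real L * real a ^ CARD('n)) * V"
      by (simp add: power2_eq_square algebra_simps)
    moreover have pos: "0 < real L * real a ^ CARD('n)" using L1 a1 by simp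
    ultimately have "(real L * real a ^ CARD('n)) * J\<^sup>2 \<le> V" by (rule mult_left_le_imp_le)
    moreover have "real L * J\<^sup>2 \<le> (real L * real a ^ CARD('n)) * J\<^sup>2"
    proof -
      have "1 \<le> real a ^ CARD('n)" using a1 by simp
      then have "real L * 1 \<le> real L * real a ^ CARD('n)" by (intro mult_left_mono) auto
      then show ?thesis by (intro mult_right_mono) auto
    qed
    ultimately show ?thesis by linarith
  qed
  show ?thesis
  proof (rule ccontr)
    assume "(\<integral>x. \<Psi> x \<partial>lborel) \<noteq> 0"
    then have J: "0 < J\<^sup>2" unfolding J_def by simp
    define L where "L = nat \<lceil>V / J\<^sup>2\<rceil> + 1"
    have "1 \<le> L" unfolding L_def by simp
    from main[OF this] have "real L * J\<^sup>2 \<le> V" .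
    moreover have "V / J\<^sup>2 < real L" unfolding L_def by linarith
    then have "V < real L * J\<^sup>2" using J by (simp add: field_simps)
    ultimately show False by simp
  qed
qed

lemma L2_prod_integrable:
  fixes u w :: "'a::euclidean_space \<Rightarrow> real"
  assumes "square_integrable u" "square_integrable w"
  shows "integrable lborel (\<lambda>x. u x * w x)"
proof -
  have m: "u \<in> borel_measurable lborel" "w \<in> borel_measurable lborel"
    and i: "integrable lborel (\<lambda>x. (u x)\<^sup>2)" "integrable lborel (\<lambda>x. (w x)\<^sup>2)"
    using assms unfolding square_integrable_def by auto
  have ii: "integrable lborel (\<lambda>x. (u x)\<^sup>2 + (w x)\<^sup>2)" using i by simp
  show ?thesis
  proof (rule Bochner_Integration.integrable_bound[OF ii])
    show "(\<lambda>x. u x * w x) \<in> borel_measurable lborel" using m by simp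
    have "\<bar>u x * w x\<bar> \<le> (u x)\<^sup>2 + (w x)\<^sup>2" for x
    proof -
      have "0 \<le> (\<bar>u x\<bar> - \<bar>w x\<bar>)\<^sup>2" by simp
      then have "2 * (\<bar>u x\<bar> * \<bar>w x\<bar>) \<le> (u x)\<^sup>2 + (w x)\<^sup>2" by (simp add: power2_eq_square algebra_simps)
      moreover have "0 \<le> \<bar>u x\<bar> * \<bar>w x\<bar>" by simp
      ultimately have "\<bar>u x\<bar> * \<bar>w x\<bar> \<le> (u x)\<^sup>2 + (w x)\<^sup>2" by linarith
      then show ?thesis by (simp add: abs_mult)
    qed
    then show "AE x in lborel. norm (u x * w x) \<le> norm ((u x)\<^sup>2 + (w x)\<^sup>2)" by simp
  qed
qed

lemma square_integrable_add: "square_integrable u \<Longrightarrow> square_integrable w \<Longrightarrow> square_integrable (\<lambda>x. u x + w x)"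
proof -
  assume a: "square_integrable u" "square_integrable w"
  have "integrable lborel (\<lambda>x. (u x)\<^sup>2 + 2 * (u x * w x) + (w x)\<^sup>2)"
    using a L2_prod_integrable[OF a] unfolding square_integrable_def by simp
  moreover have "(\<lambda>x. (u x)\<^sup>2 + 2 * (u x * w x) + (w x)\<^sup>2) = (\<lambda>x. (u x + w x)\<^sup>2)"
    by (simp add: fun_eq_iff power2_sum algebra_simps)
  ultimately have "integrable lborel (\<lambda>x. (u x + w x)\<^sup>2)" by simp
  then show ?thesis using a unfolding square_integrable_def by (auto intro!: borel_measurable_add)
qed

lemma square_integrable_scale: "square_integrable u \<Longrightarrow> square_integrable (\<lambda>x. c * u x)"
  unfolding square_integrable_def by (auto simp: power_mult_distrib intro!: borel_measurable_times)

lemma polarization: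
  fixes b :: "'i \<Rightarrow> 'a::euclidean_space \<Rightarrow> real"
  assumes onb: "is_ONB b I" and u: "square_integrable u" and w: "square_integrable w"
  shows "((\<lambda>a. wip u (b a) * wip w (b a)) has_sum (\<integral>x. u x * w x \<partial>lborel)) I"
proof -
  have bsq: "\<And>a. a \<in> I \<Longrightarrow> square_integrable (b a)" using onb unfolding is_ONB_def by auto
  have par: "\<And>v. square_integrable v \<Longrightarrow> ((\<lambda>a. (wip v (b a))\<^sup>2) has_sum (\<integral>x. (v x)\<^sup>2 \<partial>lborel)) I"
    using onb unfolding is_ONB_def by auto
  have sp: "square_integrable (\<lambda>x. u x + w x)" by (rule square_integrable_add[OF u w])
  have sm: "square_integrable (\<lambda>x. u x - w x)" using square_integrable_add[OF u square_integrable_scale[OF w, of "-1"]] by simp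
  have lin_p: "wip (\<lambda>x. u x + w x) (b a) = wip u (b a) + wip w (b a)" if "a \<in> I" for a
    using L2_prod_integrable[OF u bsq[OF that]] L2_prod_integrable[OF w bsq[OF that]]
    unfolding wip_def by (simp add: distrib_right)
  have lin_m: "wip (\<lambda>x. u x - w x) (b a) = wip u (b a) - wip w (b a)" if "a \<in> I" for a
    using L2_prod_integrable[OF u bsq[OF that]] L2_prod_integrable[OF w bsq[OF that]]
    unfolding wip_def by (simp add: algebra_simps)
  have h1: "((\<lambda>a. (wip u (b a) + wip w (b a))\<^sup>2) has_sum (\<integral>x. (u x + w x)\<^sup>2 \<partial>lborel)) I"
    using par[OF sp] by (rule has_sum_cong[THEN iffD1, rotated]) (simp add: lin_p)
  have h2: "((\<lambda>a. (wip u (b a) - wip w (b a))\<^sup>2) has_sum (\<integral>x. (u x - w x)\<^sup>2 \<partial>lborel)) I"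
    using par[OF sm] by (rule has_sum_cong[THEN iffD1, rotated]) (simp add: lin_m)
  have h3: "((\<lambda>a. (wip u (b a) + wip w (b a))\<^sup>2 - (wip u (b a) - wip w (b a))\<^sup>2) has_sum
      ((\<integral>x. (u x + w x)\<^sup>2 \<partial>lborel) - (\<integral>x. (u x - w x)\<^sup>2 \<partial>lborel))) I"
    using has_sum_add[OF h1 has_sum_uminusI[OF h2]] by simp
  have h4: "((\<lambda>a. (1/4) * ((wip u (b a) + wip w (b a))\<^sup>2 - (wip u (b a) - wip w (b a))\<^sup>2)) has_sum
      ((1/4) * ((\<integral>x. (u x + w x)\<^sup>2 \<partial>lborel) - (\<integral>x. (u x - w x)\<^sup>2 \<partial>lborel)))) I"
    by (rule has_sum_cmult_right[OF h3])
  have e1: "(1/4) * ((p + q)\<^sup>2 - (p - q)\<^sup>2) = p * q" for p q :: real by (simp add: power2_eq_square algebra_simps)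
  have iu: "integrable lborel (\<lambda>x. (u x)\<^sup>2)" and iw: "integrable lborel (\<lambda>x. (w x)\<^sup>2)"
    using u w unfolding square_integrable_def by auto
  have iuw: "integrable lborel (\<lambda>x. u x * w x)" by (rule L2_prod_integrable[OF u w])
  have "(\<integral>x. (u x + w x)\<^sup>2 \<partial>lborel) = (\<integral>x. (u x)\<^sup>2 + 2 * (u x * w x) + (w x)\<^sup>2 \<partial>lborel)"
    by (intro Bochner_Integration.integral_cong) (simp_all add: power2_sum algebra_simps)
  also have "\<dots> = (\<integral>x. (u x)\<^sup>2 \<partial>lborel) + 2 * (\<integral>x. u x * w x \<partial>lborel) + (\<integral>x. (w x)\<^sup>2 \<partial>lborel)"
    using iu iw iuw by simp
  finally have p1: "(\<integral>x. (u x + w x)\<^sup>2 \<partial>lborel) = (\<integral>x. (u x)\<^sup>2 \<partial>lborel) + 2 * (\<integral>x. u x * w x \<partial>lborel) + (\<integral>x. (w x)\<^sup>2 \<partial>lborel)" .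
  have "(\<integral>x. (u x - w x)\<^sup>2 \<partial>lborel) = (\<integral>x. (u x)\<^sup>2 - 2 * (u x * w x) + (w x)\<^sup>2 \<partial>lborel)"
    by (intro Bochner_Integration.integral_cong) (simp_all add: power2_diff algebra_simps)
  also have "\<dots> = (\<integral>x. (u x)\<^sup>2 \<partial>lborel) - 2 * (\<integral>x. u x * w x \<partial>lborel) + (\<integral>x. (w x)\<^sup>2 \<partial>lborel)"
    using iu iw iuw by simp
  finally have p2: "(\<integral>x. (u x - w x)\<^sup>2 \<partial>lborel) = (\<integral>x. (u x)\<^sup>2 \<partial>lborel) - 2 * (\<integral>x. u x * w x \<partial>lborel) + (\<integral>x. (w x)\<^sup>2 \<partial>lborel)" .
  show ?thesis using h4 unfolding e1 p1 p2 by simp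
qed

lemma Kpw_nonneg: "0 \<le> B0 \<Longrightarrow> 0 \<le> m \<Longrightarrow> 0 \<le> Kpw TYPE('n::finite) B0 m"
  unfolding Kpw_def by simp

lemma wb_ortho_psi:
  assumes onb: "is_ONB (wsys \<phi>0 \<psi>0 :: _ \<Rightarrow> real^'n::finite \<Rightarrow> real) wsys_index" and \<iota>: "\<iota> \<in> wtypes"
  shows "(\<integral>x. atom (psi_type \<phi>0 \<psi>0 \<iota>) l k (x::real^'n) * atom (psi_type \<phi>0 \<psi>0 \<iota>) l' k' x \<partial>lborel)
          = (if (l, k) = (l', k') then 1 else 0)"
proof -
  have "wip (wsys \<phi>0 \<psi>0 (Inr (l, \<iota>, k)) :: real^'n \<Rightarrow> real) (wsys \<phi>0 \<psi>0 (Inr (l', \<iota>, k')))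
      = (if Inr (l, \<iota>, k) = (Inr (l', \<iota>, k') :: ('n \<Rightarrow> int) + _) then 1 else 0)"
    using onb in_wsys_index(2)[OF \<iota>] unfolding is_ONB_def by blast
  then show ?thesis by (simp add: wsys_Inr wip_def)
qed

lemma wb_psi_zero:
  assumes wb: "wavelet_basis TYPE('n::finite) S \<phi>0 \<psi>0" and \<iota>: "\<iota> \<in> wtypes"
  shows "(\<integral>x. psi_type \<phi>0 \<psi>0 \<iota> (x::real^'n) \<partial>lborel) = 0"
proof -
  obtain B0 m where c1: "csf \<phi>0 B0" and c2: "csf \<psi>0 B0"
     and onb: "is_ONB (wsys \<phi>0 \<psi>0 :: _ \<Rightarrow> real^'n \<Rightarrow> real) wsys_index"
    using wb_basic[OF wb] by metis
  show ?thesis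
    by (rule psi_mean_zero[OF csf_Psi[OF c1 c2]]) (rule wb_ortho_psi[OF onb \<iota>])
qed

definition vT :: "real \<Rightarrow> 'a::euclidean_space \<Rightarrow> real" where
  "vT T x = max 0 (1 - norm x / T)"

lemma vT_csf: "0 < T \<Longrightarrow> csf (vT T :: 'a::euclidean_space \<Rightarrow> real) T"
proof -
  assume T: "0 < T"
  have "continuous_on UNIV (\<lambda>x::'a. max 0 (1 - norm x / T))" using T by (intro continuous_intros) auto
  moreover have "max 0 (1 - norm y / T) = 0" if "T < norm y" for y :: 'a
    using that T by (simp add: max_def field_simps)
  ultimately show ?thesis unfolding csf_def vT_def[abs_def] using T by auto
qed

lemma cball_fin: "emeasure lborel (cball (c::'a::euclidean_space) r) < top"
  using emeasure_lborel_cball_finite[of c r] by (simp only: infinity_ennreal_def)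

lemma vT_lip: "0 < T \<Longrightarrow> \<bar>vT T x - vT T y\<bar> \<le> (1 / T) * dist x y"
proof -
  assume T: "0 < T"
  have "\<bar>max 0 p - max 0 q\<bar> \<le> \<bar>p - q\<bar>" for p q :: real by (simp add: max_def abs_if)
  then have "\<bar>vT T x - vT T y\<bar> \<le> \<bar>(1 - norm x / T) - (1 - norm y / T)\<bar>" unfolding vT_def by blast
  also have "(1 - norm x / T) - (1 - norm y / T) = (norm y - norm x) / T" by (simp add: diff_divide_distrib)
  then have "\<bar>(1 - norm x / T) - (1 - norm y / T)\<bar> = \<bar>norm y - norm x\<bar> / T" using T by simp
  also have "\<dots> \<le> norm (y - x) / T" using T by (intro divide_right_mono norm_triangle_ineq3) auto
  finally show ?thesis by (simp add: dist_norm norm_minus_commute)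
qed

lemma vT_bounds: "0 < T \<Longrightarrow> 0 \<le> vT T x \<and> vT T x \<le> 1"
  unfolding vT_def using norm_ge_zero[of x] by (auto simp: max_def field_simps)

lemma vT_int_le:
  assumes T: "0 < T"
  shows "(\<integral>x. vT T (x::'a::euclidean_space) \<partial>lborel) \<le> unit_ball_vol (real DIM('a)) * T ^ DIM('a)"
proof -
  have "(\<integral>x. vT T (x::'a) \<partial>lborel) \<le> (\<integral>x. indicator (cball (0::'a) T) x \<partial>lborel)"
  proof (rule integral_mono)
    show "integrable lborel (vT T :: 'a \<Rightarrow> real)" by (rule csf_integrable[OF vT_csf[OF T]])
    show "integrable lborel (\<lambda>x. indicator (cball (0::'a) T) x :: real)"
      by (rule integrable_real_indicator) (auto simp: cball_fin)
    fix x :: 'a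
    show "vT T x \<le> indicator (cball 0 T) x"
    proof (cases "norm x \<le> T")
      case True then show ?thesis using vT_bounds[OF T, of x] by (simp add: indicator_def)
    next
      case False
      have "\<forall>y::'a. T < norm y \<longrightarrow> vT T y = 0" using vT_csf[OF T] unfolding csf_def by blast
      then have "vT T x = 0" using False by (simp add: not_le)
      then show ?thesis by simp
    qed
  qed
  also have "\<dots> = measure lborel (cball (0::'a) T)" by simp
  also have "\<dots> = unit_ball_vol (real DIM('a)) * T ^ DIM('a)"
    using T by (simp add: measure_def emeasure_cball)
  finally show ?thesis .
qed

lemma vT_sq_ge:
  assumes T: "0 < T"
  shows "(1/4) * (unit_ball_vol (real DIM('a)) * (T/2) ^ DIM('a)) \<le> (\<integral>x. (vT T (x::'a::euclidean_space))\<^sup>2 \<partial>lborel)"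
proof -
  have "(\<integral>x. (1/4) * indicator (cball (0::'a) (T/2)) x \<partial>lborel) \<le> (\<integral>x. (vT T (x::'a))\<^sup>2 \<partial>lborel)"
  proof (rule integral_mono)
    show "integrable lborel (\<lambda>x. (vT T (x::'a))\<^sup>2)"
      using csf_integrable_cont[OF vT_csf[OF T] conjunct1[OF vT_csf[OF T, unfolded csf_def]]]
      by (simp add: power2_eq_square)
    show "integrable lborel (\<lambda>x. (1/4) * indicator (cball (0::'a) (T/2)) x :: real)"
      by (intro integrable_mult_right integrable_real_indicator) (auto simp: cball_fin)
    fix x :: 'a
    show "(1/4) * indicator (cball 0 (T/2)) x \<le> (vT T x)\<^sup>2"
    proof (cases "norm x \<le> T/2")
      case True
      then have "1/2 \<le> vT T x" using T unfolding vT_def by (auto simp: field_simps)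
      then have "(1/2)\<^sup>2 \<le> (vT T x)\<^sup>2" by (intro power_mono) auto
      then show ?thesis using True by (simp add: indicator_def power2_eq_square)
    next
      case False then show ?thesis by (simp add: indicator_def)
    qed
  qed
  moreover have e1: "(\<integral>x. (1/4) * indicator (cball (0::'a) (T/2)) x \<partial>lborel) = (1/4) * measure lborel (cball (0::'a) (T/2))"
    by simp
  moreover have e2: "measure lborel (cball (0::'a) (T/2)) = unit_ball_vol (real DIM('a)) * (T/2) ^ DIM('a)"
    using T by (simp add: measure_def emeasure_cball)
  ultimately show ?thesis by (simp only: e1 e2)
qed

lemma coef_sum_real:
  fixes v :: "real^'n::finite \<Rightarrow> real"
  assumes c1: "csf \<phi>0 B0" and c2: "csf \<psi>0 B0" and m1: "\<And>t. \<bar>\<phi>0 t\<bar> \<le> m" and m2: "\<And>t. \<bar>\<psi>0 t\<bar> \<le> m"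
    and v: "v \<in> borel_measurable lborel" and F: "finite F" and s0: "0 \<le> s" and s1: "s \<le> 1"
    and iv: "integrable lborel (\<lambda>x. (1 + s * norm x) * \<bar>v x\<bar>)"
  shows "(\<Sum>a\<in>F. om s a * \<bar>wip v (wsys \<phi>0 \<psi>0 a)\<bar>) \<le> Kpw TYPE('n) B0 m * (\<integral>x. (1 + s * norm x) * \<bar>v x\<bar> \<partial>lborel)"
proof -
  have B0: "0 \<le> B0" using c1 by (simp add: csf_def)
  have m0: "0 \<le> m" using m1[of 0] by linarith
  have K0: "0 \<le> Kpw TYPE('n) B0 m" by (rule Kpw_nonneg[OF B0 m0])
  have nn: "\<And>x. 0 \<le> (1 + s * norm x) * \<bar>v x\<bar>" using s0 by simp
  have I0: "0 \<le> (\<integral>x. (1 + s * norm x) * \<bar>v x\<bar> \<partial>lborel)" using nn by (simp add: integral_nonneg)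
  have "ennreal (\<Sum>a\<in>F. om s a * \<bar>wip v (wsys \<phi>0 \<psi>0 a)\<bar>) = (\<Sum>a\<in>F. ennreal (om s a * \<bar>wip v (wsys \<phi>0 \<psi>0 a)\<bar>))"
    by (rule sum_ennreal[symmetric]) (simp add: om_nonneg[OF s0])
  also have "\<dots> \<le> ennreal (Kpw TYPE('n) B0 m) * (\<integral>\<^sup>+x. ennreal ((1 + s * norm x) * \<bar>v x\<bar>) \<partial>lborel)"
    by (rule coef_sum_bound[OF c1 c2 m1 m2 v F s0 s1])
  also have "(\<integral>\<^sup>+x. ennreal ((1 + s * norm x) * \<bar>v x\<bar>) \<partial>lborel) = ennreal (\<integral>x. (1 + s * norm x) * \<bar>v x\<bar> \<partial>lborel)"
    using iv nn by (intro nn_integral_eq_integral) auto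
  also have "ennreal (Kpw TYPE('n) B0 m) * ennreal (\<integral>x. (1 + s * norm x) * \<bar>v x\<bar> \<partial>lborel)
      = ennreal (Kpw TYPE('n) B0 m * (\<integral>x. (1 + s * norm x) * \<bar>v x\<bar> \<partial>lborel))"
    using K0 I0 by (simp add: ennreal_mult)
  finally show ?thesis using K0 I0 by (simp add: ennreal_le_iff)
qed

lemma wb_phi_nonzero:
  assumes wb: "wavelet_basis TYPE('n::finite) S \<phi>0 \<psi>0"
  shows "(\<integral>x. Phi \<phi>0 (x::real^'n) \<partial>lborel) \<noteq> 0"
proof
  assume z: "(\<integral>x. Phi \<phi>0 (x::real^'n) \<partial>lborel) = 0"
  obtain B0 m where c1: "csf \<phi>0 B0" and c2: "csf \<psi>0 B0" and m1: "\<And>t. \<bar>\<phi>0 t\<bar> \<le> m" and m2: "\<And>t. \<bar>\<psi>0 t\<bar> \<le> m"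
     and onb: "is_ONB (wsys \<phi>0 \<psi>0 :: _ \<Rightarrow> real^'n \<Rightarrow> real) wsys_index"
    using wb_basic[OF wb] by metis
  define B where "B = real CARD('n) * B0"
  have B0: "0 \<le> B0" using c1 by (simp add: csf_def)
  have B: "0 \<le> B" using B0 by (simp add: B_def)
  have m0: "0 \<le> m" using m1[of 0] by linarith
  have csP: "csf (Phi \<phi>0 :: real^'n \<Rightarrow> real) B" unfolding B_def by (rule csf_Phi[OF c1])
  have csS: "csf (psi_type \<phi>0 \<psi>0 \<iota> :: real^'n \<Rightarrow> real) B" for \<iota> unfolding B_def by (rule csf_Psi[OF c1 c2])
  define AP where "AP = (\<integral>x. \<bar>Phi \<phi>0 (x::real^'n)\<bar> \<partial>lborel)"
  define AS where "AS \<iota> = (\<integral>x. \<bar>psi_type \<phi>0 \<psi>0 \<iota> (x::real^'n)\<bar> \<partial>lborel)" for \<iota>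
  define D where "D = B * (AP + (\<Sum>\<iota>\<in>UNIV. AS \<iota>))"
  have AP0: "0 \<le> AP" unfolding AP_def by simp
  have AS0: "0 \<le> AS \<iota>" for \<iota> unfolding AS_def by simp
  have APle: "AP \<le> AP + (\<Sum>\<iota>\<in>UNIV. AS \<iota>)" using AS0 by (simp add: sum_nonneg)
  have ASle: "AS \<iota> \<le> AP + (\<Sum>\<iota>\<in>UNIV. AS \<iota>)" for \<iota>
  proof -
    have "AS \<iota> \<le> (\<Sum>\<iota>\<in>UNIV. AS \<iota>)" using AS0 by (intro member_le_sum) auto
    then show ?thesis using AP0 by simp
  qed
  have D0: "0 \<le> D" unfolding D_def using B AP0 AS0 by (simp add: sum_nonneg)
  define K where "K = Kpw TYPE('n) B0 m"
  have K0: "0 \<le> K" unfolding K_def by (rule Kpw_nonneg[OF B0 m0])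
  define \<omega> where "\<omega> = unit_ball_vol (real CARD('n))"
  have \<omega>: "0 < \<omega>" unfolding \<omega>_def by simp
  define T where "T = 4 * 2 ^ CARD('n) * D * K + 1"
  have "0 \<le> 4 * 2 ^ CARD('n) * D * K" using D0 K0 by simp
  then have T: "0 < T" unfolding T_def by linarith
  define v where "v = (vT T :: real^'n \<Rightarrow> real)"
  have vcs: "csf v T" unfolding v_def by (rule vT_csf[OF T])
  have vcont: "continuous_on UNIV v" using vcs by (simp add: csf_def)
  have vlip: "\<bar>v x - v y\<bar> \<le> (1 / T) * dist x y" for x y unfolding v_def by (rule vT_lip[OF T])
  have vnn: "0 \<le> v x" for x unfolding v_def using vT_bounds[OF T] by blast
  have vint: "integrable lborel v" by (rule csf_integrable[OF vcs])
  have vmeas: "v \<in> borel_measurable lborel" using csf_measurable[OF vcs] by simp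
  have v2: "integrable lborel (\<lambda>x. (v x)\<^sup>2)"
    using csf_integrable_cont[OF vcs vcont] by (simp add: power2_eq_square)
  have vsq: "square_integrable v" unfolding square_integrable_def using vmeas v2 by simp
  have par: "((\<lambda>a. (wip v (wsys \<phi>0 \<psi>0 a))\<^sup>2) has_sum (\<integral>x. (v x)\<^sup>2 \<partial>lborel)) wsys_index"
    using onb vsq unfolding is_ONB_def by blast
  have cb: "\<bar>wip v (wsys \<phi>0 \<psi>0 a)\<bar> \<le> (D / T) * om 0 a" if a: "a \<in> wsys_index" for a
  proof (cases a)
    case (Inl k)
    have "\<bar>wip v (wsys \<phi>0 \<psi>0 a)\<bar> = \<bar>\<integral>x. v x * atom (Phi \<phi>0) 0 k x \<partial>lborel\<bar>"
      by (simp add: Inl wsys_Inl wip_def)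
    also have "\<dots> \<le> (1 / T) * B * 2 powr (- (real 0 * (real CARD('n) / 2 + 1))) * AP"
      unfolding AP_def by (rule atom_lip[OF csP z vcont vlip]) (use T in simp)
    also have "\<dots> = (1 / T) * (B * AP)" by simp
    also have "\<dots> \<le> (1 / T) * D" unfolding D_def using B T APle by (intro mult_left_mono) auto
    finally show ?thesis by (simp add: Inl om_def)
  next
    case (Inr p)
    then obtain l \<iota> k where p: "a = Inr (l, \<iota>, k)" by (metis prod_cases3)
    have \<iota>: "\<iota> \<in> wtypes" using a p by (auto simp: wsys_index_def)
    have z2: "(\<integral>x. psi_type \<phi>0 \<psi>0 \<iota> (x::real^'n) \<partial>lborel) = 0" by (rule wb_psi_zero[OF wb \<iota>])
    have "\<bar>wip v (wsys \<phi>0 \<psi>0 a)\<bar> = \<bar>\<integral>x. v x * atom (psi_type \<phi>0 \<psi>0 \<iota>) l k x \<partial>lborel\<bar>"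
      by (simp add: p wsys_Inr wip_def)
    also have "\<dots> \<le> (1 / T) * B * 2 powr (- (real l * (real CARD('n) / 2 + 1))) * AS \<iota>"
      unfolding AS_def by (rule atom_lip[OF csS z2 vcont vlip]) (use T in simp)
    also have "\<dots> = (1 / T) * 2 powr (- (real l * (real CARD('n) / 2 + 1))) * (B * AS \<iota>)" by simp
    also have "\<dots> \<le> (1 / T) * 2 powr (- (real l * (real CARD('n) / 2 + 1))) * D"
      unfolding D_def using B T ASle[of \<iota>] by (intro mult_left_mono) auto
    finally show ?thesis by (simp add: p om_def mult.commute)
  qed
  have key: "(\<integral>x. (v x)\<^sup>2 \<partial>lborel) \<le> (D / T) * (K * (\<integral>x. v x \<partial>lborel))"
  proof -
    have "\<bar>\<integral>x. (v x)\<^sup>2 \<partial>lborel\<bar> \<le> (D / T) * (K * (\<integral>x. v x \<partial>lborel))"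
    proof (rule has_sum_abs_le[OF par])
      fix F :: "(('n \<Rightarrow> int) + (nat \<times> ('n \<Rightarrow> bool) \<times> ('n \<Rightarrow> int))) set"
      assume F: "finite F" "F \<subseteq> wsys_index"
      have "\<bar>\<Sum>a\<in>F. (wip v (wsys \<phi>0 \<psi>0 a))\<^sup>2\<bar> = (\<Sum>a\<in>F. (wip v (wsys \<phi>0 \<psi>0 a))\<^sup>2)"
        by (simp add: sum_nonneg)
      also have "\<dots> \<le> (\<Sum>a\<in>F. (D / T) * (om 0 a * \<bar>wip v (wsys \<phi>0 \<psi>0 a)\<bar>))"
      proof (rule sum_mono)
        fix a assume "a \<in> F"
        then have "\<bar>wip v (wsys \<phi>0 \<psi>0 a)\<bar> \<le> (D / T) * om 0 a" using F cb by blast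
        then have "\<bar>wip v (wsys \<phi>0 \<psi>0 a)\<bar> * \<bar>wip v (wsys \<phi>0 \<psi>0 a)\<bar> \<le> (D / T) * om 0 a * \<bar>wip v (wsys \<phi>0 \<psi>0 a)\<bar>"
          by (rule mult_right_mono) simp
        then show "(wip v (wsys \<phi>0 \<psi>0 a))\<^sup>2 \<le> (D / T) * (om 0 a * \<bar>wip v (wsys \<phi>0 \<psi>0 a)\<bar>)"
          by (simp add: power2_eq_square abs_mult_self_eq)
      qed
      also have "\<dots> = (D / T) * (\<Sum>a\<in>F. om 0 a * \<bar>wip v (wsys \<phi>0 \<psi>0 a)\<bar>)" by (simp add: sum_distrib_left)
      also have "\<dots> \<le> (D / T) * (K * (\<integral>x. (1 + 0 * norm x) * \<bar>v x\<bar> \<partial>lborel))"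
        unfolding K_def using D0 T
        by (intro mult_left_mono coef_sum_real[OF c1 c2 m1 m2 vmeas F(1)]) (auto simp: vint)
      also have "(\<integral>x. (1 + 0 * norm x) * \<bar>v x\<bar> \<partial>lborel) = (\<integral>x. v x \<partial>lborel)" using vnn by simp
      finally show "\<bar>\<Sum>a\<in>F. (wip v (wsys \<phi>0 \<psi>0 a))\<^sup>2\<bar> \<le> (D / T) * (K * (\<integral>x. v x \<partial>lborel))" .
    qed
    then show ?thesis by simp
  qed
  have up: "(\<integral>x. v x \<partial>lborel) \<le> \<omega> * T ^ CARD('n)"
    unfolding v_def \<omega>_def using vT_int_le[OF T, where 'a="real^'n"] by simp
  have lo: "(1/4) * (\<omega> * (T/2) ^ CARD('n)) \<le> (\<integral>x. (v x)\<^sup>2 \<partial>lborel)"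
    unfolding v_def \<omega>_def using vT_sq_ge[OF T, where 'a="real^'n"] by simp
  have "(1/4) * (\<omega> * (T/2) ^ CARD('n)) \<le> (D / T) * (K * (\<omega> * T ^ CARD('n)))"
  proof -
    have "(D / T) * (K * (\<integral>x. v x \<partial>lborel)) \<le> (D / T) * (K * (\<omega> * T ^ CARD('n)))"
      using up D0 K0 T by (intro mult_left_mono) auto
    then show ?thesis using lo key by linarith
  qed
  moreover have "(T/2) ^ CARD('n) = T ^ CARD('n) / 2 ^ CARD('n)" by (simp add: power_divide)
  ultimately have "(1/4) * (\<omega> * T ^ CARD('n)) / 2 ^ CARD('n) \<le> (D * K / T) * (\<omega> * T ^ CARD('n))" by simp
  then have "(\<omega> * T ^ CARD('n)) * (1 / (4 * 2 ^ CARD('n))) \<le> (\<omega> * T ^ CARD('n)) * (D * K / T)"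
    by (simp add: algebra_simps)
  moreover have "0 < \<omega> * T ^ CARD('n)" using \<omega> T by simp
  ultimately have "1 / (4 * 2 ^ CARD('n)) \<le> D * K / T" by (rule mult_left_le_imp_le)
  then have "T \<le> 4 * 2 ^ CARD('n) * (D * K)" using T by (simp add: field_simps)
  then show False unfolding T_def by simp
qed

definition chi :: "real \<Rightarrow> 'a::euclidean_space \<Rightarrow> real" where
  "chi R x = max 0 (min 1 (2 - norm x / R))"

lemma chi_bounds: "0 \<le> chi R x" "chi R x \<le> 1"
  unfolding chi_def by auto

lemma chi_one: "0 < R \<Longrightarrow> norm x \<le> R \<Longrightarrow> chi R x = 1"
  unfolding chi_def by (auto simp: field_simps max_def min_def)

lemma chi_zero: "0 < R \<Longrightarrow> 2 * R < norm x \<Longrightarrow> chi R x = 0"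
  unfolding chi_def by (auto simp: field_simps max_def min_def)

lemma chi_cont: "0 < R \<Longrightarrow> continuous_on UNIV (chi R :: 'a::euclidean_space \<Rightarrow> real)"
  unfolding chi_def[abs_def] by (intro continuous_intros) auto

lemma chi_lip: assumes R: "0 < R" shows "\<bar>chi R x - chi R y\<bar> \<le> (1 / R) * dist x y"
proof -
  have m1: "\<bar>max 0 p - max 0 q\<bar> \<le> \<bar>p - q\<bar>" for p q :: real by (simp add: max_def abs_if)
  have m2: "\<bar>min 1 p - min 1 q\<bar> \<le> \<bar>p - q\<bar>" for p q :: real by (simp add: min_def abs_if)
  have "\<bar>chi R x - chi R y\<bar> \<le> \<bar>(2 - norm x / R) - (2 - norm y / R)\<bar>"
    unfolding chi_def using m1 m2 order_trans by blast
  also have "(2 - norm x / R) - (2 - norm y / R) = (norm y - norm x) / R" by (simp add: diff_divide_distrib)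
  then have "\<bar>(2 - norm x / R) - (2 - norm y / R)\<bar> = \<bar>norm y - norm x\<bar> / R" using R by simp
  also have "\<dots> \<le> norm (y - x) / R" using R by (intro divide_right_mono norm_triangle_ineq3) auto
  finally show ?thesis by (simp add: dist_norm norm_minus_commute)
qed

lemma cutoff_lip_aux:
  fixes h :: "'a::euclidean_space \<Rightarrow> real"
  assumes hl: "\<And>x y. \<bar>h x - h y\<bar> \<le> dist x y" and hb: "\<And>x. \<bar>h x\<bar> \<le> norm x + c0"
    and R1: "1 \<le> R" and Rc: "c0 \<le> R" and y: "norm y \<le> 2 * R"
  shows "\<bar>h x * chi R x - h y * chi R y\<bar> \<le> 4 * dist x y"
proof -
  have R: "0 < R" using R1 by simp
  have "h x * chi R x - h y * chi R y = (h x - h y) * chi R x + h y * (chi R x - chi R y)"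
    by (simp add: algebra_simps)
  then have "\<bar>h x * chi R x - h y * chi R y\<bar> \<le> \<bar>h x - h y\<bar> * chi R x + \<bar>h y\<bar> * \<bar>chi R x - chi R y\<bar>"
    by (metis abs_mult abs_triangle_ineq abs_of_nonneg chi_bounds(1))
  also have "\<dots> \<le> dist x y * 1 + (3 * R) * ((1 / R) * dist x y)"
  proof (rule add_mono)
    show "\<bar>h x - h y\<bar> * chi R x \<le> dist x y * 1" by (intro mult_mono hl chi_bounds) auto
    have "\<bar>h y\<bar> \<le> 3 * R" using hb[of y] y Rc by linarith
    then show "\<bar>h y\<bar> * \<bar>chi R x - chi R y\<bar> \<le> (3 * R) * ((1 / R) * dist x y)"
      by (intro mult_mono chi_lip[OF R]) auto
  qed
  also have "\<dots> = 4 * dist x y" using R by (simp add: field_simps)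
  finally show ?thesis .
qed

lemma cutoff_lip:
  fixes h :: "'a::euclidean_space \<Rightarrow> real"
  assumes hl: "\<And>x y. \<bar>h x - h y\<bar> \<le> dist x y" and hb: "\<And>x. \<bar>h x\<bar> \<le> norm x + c0"
    and R1: "1 \<le> R" and Rc: "c0 \<le> R"
  shows "\<bar>h x * chi R x - h y * chi R y\<bar> \<le> 4 * dist x y"
proof (cases "norm y \<le> 2 * R")
  case True then show ?thesis by (rule cutoff_lip_aux[OF hl hb R1 Rc])
next
  case False
  show ?thesis
  proof (cases "norm x \<le> 2 * R")
    case True
    have "\<bar>h y * chi R y - h x * chi R x\<bar> \<le> 4 * dist y x" by (rule cutoff_lip_aux[OF hl hb R1 Rc True])
    then show ?thesis by (simp add: abs_minus_commute dist_commute)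
  next
    case False2: False
    have "chi R x = 0" "chi R y = 0" using False False2 R1 by (auto intro!: chi_zero)
    then show ?thesis by simp
  qed
qed

definition swt :: "(('n::finite \<Rightarrow> int) + (nat \<times> ('n \<Rightarrow> bool) \<times> ('n \<Rightarrow> int))) \<Rightarrow> real" where
  "swt a = (case a of Inl k \<Rightarrow> norm (int_vec k)
           | Inr (l, \<iota>, k) \<Rightarrow> 2 powr (- (real l * (real CARD('n) / 2 + 1))))"

lemma swt_nonneg: "0 \<le> swt a"
  by (auto simp: swt_def split: sum.splits prod.splits)

lemma swt_le_om: "swt a \<le> om 1 a"
  by (auto simp: swt_def om_def split: sum.splits prod.splits)

definition Cmain :: "'n::finite itself \<Rightarrow> (real \<Rightarrow> real) \<Rightarrow> (real \<Rightarrow> real) \<Rightarrow> real \<Rightarrow> real" where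
  "Cmain _ \<phi>0 \<psi>0 B0 =
     (1 + real CARD('n) * B0 + real CARD('n) * B0 * (\<integral>x. \<bar>Phi \<phi>0 (x::real^'n)\<bar> \<partial>lborel) / \<bar>\<integral>x. Phi \<phi>0 (x::real^'n) \<partial>lborel\<bar>)
        * (\<integral>x. \<bar>Phi \<phi>0 (x::real^'n)\<bar> \<partial>lborel)
     + 4 * (real CARD('n) * B0) * (\<Sum>\<iota>\<in>UNIV. \<integral>x. \<bar>psi_type \<phi>0 \<psi>0 \<iota> (x::real^'n)\<bar> \<partial>lborel)"

lemma Cmain_nonneg: "0 \<le> B0 \<Longrightarrow> 0 \<le> Cmain TYPE('n::finite) \<phi>0 \<psi>0 B0"
  unfolding Cmain_def by (intro add_nonneg_nonneg mult_nonneg_nonneg sum_nonneg) (auto simp: integral_nonneg)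

lemma int_vec_zero: "int_vec (\<lambda>_. 0) = 0"
  by (simp add: int_vec_def vec_eq_iff)

lemma int_vec_norm_ge1: "k \<noteq> (\<lambda>_. 0) \<Longrightarrow> 1 \<le> norm (int_vec k)"
proof -
  assume "k \<noteq> (\<lambda>_. 0)"
  then obtain i where "k i \<noteq> 0" by auto
  then have "1 \<le> \<bar>real_of_int (k i)\<bar>" by linarith
  also have "\<dots> \<le> norm (int_vec k)" using component_le_norm_cart[of "int_vec k" i] by (simp add: int_vec_def)
  finally show ?thesis .
qed

lemma main_h:
  fixes u h :: "real^'n::finite \<Rightarrow> real"
  assumes c1: "csf \<phi>0 B0" and c2: "csf \<psi>0 B0" and m1: "\<And>t. \<bar>\<phi>0 t\<bar> \<le> m" and m2: "\<And>t. \<bar>\<psi>0 t\<bar> \<le> m"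
    and P0: "(\<integral>x. Phi \<phi>0 (x::real^'n) \<partial>lborel) \<noteq> 0"
    and psi0: "\<And>\<iota>. \<iota> \<in> wtypes \<Longrightarrow> (\<integral>x. psi_type \<phi>0 \<psi>0 \<iota> (x::real^'n) \<partial>lborel) = 0"
    and onb: "is_ONB (wsys \<phi>0 \<psi>0 :: _ \<Rightarrow> real^'n \<Rightarrow> real) wsys_index"
    and um: "u \<in> borel_measurable lborel" and ui: "integrable lborel u"
    and umom: "integrable lborel (\<lambda>x. norm x * \<bar>u x\<bar>)" and u0: "(\<integral>x. u x \<partial>lborel) = 0"
    and hlip: "1-lipschitz_on UNIV h"
    and Sb: "\<And>F. finite F \<Longrightarrow> F \<subseteq> wsys_index \<Longrightarrow> (\<Sum>a\<in>F. swt a * \<bar>wip u (wsys \<phi>0 \<psi>0 a)\<bar>) \<le> S0"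
  shows "(\<integral>x. h x * u x \<partial>lborel) \<le> Cmain TYPE('n) \<phi>0 \<psi>0 B0 * S0"
proof -
  define B where "B = real CARD('n) * B0"
  have B0: "0 \<le> B0" using c1 by (simp add: csf_def)
  have B: "0 \<le> B" using B0 by (simp add: B_def)
  have csP: "csf (Phi \<phi>0 :: real^'n \<Rightarrow> real) B" unfolding B_def by (rule csf_Phi[OF c1])
  have csS: "csf (psi_type \<phi>0 \<psi>0 \<iota> :: real^'n \<Rightarrow> real) B" for \<iota> unfolding B_def by (rule csf_Psi[OF c1 c2])
  define AP where "AP = (\<integral>x. \<bar>Phi \<phi>0 (x::real^'n)\<bar> \<partial>lborel)"
  define PP where "PP = (\<integral>x. Phi \<phi>0 (x::real^'n) \<partial>lborel)"
  define ASs where "ASs = (\<Sum>\<iota>\<in>UNIV. \<integral>x. \<bar>psi_type \<phi>0 \<psi>0 \<iota> (x::real^'n)\<bar> \<partial>lborel)"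
  define c0 where "c0 = B * AP / \<bar>PP\<bar>"
  define Cm where "Cm = Cmain TYPE('n) \<phi>0 \<psi>0 B0"
  have AP0: "0 \<le> AP" unfolding AP_def by simp
  have PP0: "PP \<noteq> 0" using P0 unfolding PP_def .
  have c00: "0 \<le> c0" unfolding c0_def using B AP0 by simp
  have ASle: "(\<integral>x. \<bar>psi_type \<phi>0 \<psi>0 \<iota> (x::real^'n)\<bar> \<partial>lborel) \<le> ASs" for \<iota>
    unfolding ASs_def by (intro member_le_sum) auto
  have ASs0: "0 \<le> ASs" unfolding ASs_def by (intro sum_nonneg) simp
  have Cm_eq: "Cm = (1 + B + c0) * AP + 4 * B * ASs"
    unfolding Cm_def Cmain_def B_def c0_def AP_def PP_def ASs_def by simp
  have Cm0: "0 \<le> Cm" unfolding Cm_def by (rule Cmain_nonneg[OF B0])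
  define K where "K = Kpw TYPE('n) B0 m"
  have m0: "0 \<le> m" using m1[of 0] by linarith
  have K0: "0 \<le> K" unfolding K_def by (rule Kpw_nonneg[OF B0 m0])
  have hl: "\<bar>h x - h y\<bar> \<le> dist x y" for x y
    using lipschitz_onD[OF hlip, of x y] by (simp add: dist_real_def)
  have hcont: "continuous_on UNIV h" by (rule lipschitz_on_continuous_on[OF hlip])
  define h1 where "h1 x = h x - h 0" for x
  have h1b: "\<bar>h1 x\<bar> \<le> norm x" for x using hl[of x 0] by (simp add: h1_def)
  have h1cont: "continuous_on UNIV h1" unfolding h1_def[abs_def] using hcont by (intro continuous_intros)
  define IP where "IP = (\<integral>x. h1 x * Phi \<phi>0 x \<partial>lborel)"
  have iP: "integrable lborel (\<lambda>x. h1 x * Phi \<phi>0 x)" by (rule csf_integrable_cont[OF csP h1cont])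
  have IPb: "\<bar>IP\<bar> \<le> B * AP"
  proof -
    have "\<bar>IP\<bar> \<le> (\<integral>x. B * \<bar>Phi \<phi>0 (x::real^'n)\<bar> \<partial>lborel)"
      unfolding IP_def
    proof (rule integral_abs_bound_integral[OF iP])
      show "integrable lborel (\<lambda>x. B * \<bar>Phi \<phi>0 (x::real^'n)\<bar>)"
        using csf_integrable[OF csf_abs[OF csP]] by simp
      fix x :: "real^'n"
      show "\<bar>h1 x * Phi \<phi>0 x\<bar> \<le> B * \<bar>Phi \<phi>0 x\<bar>"
      proof (cases "Phi \<phi>0 x = 0")
        case False
        then have "norm x \<le> B" using csP unfolding csf_def by (meson not_le)
        then have "\<bar>h1 x\<bar> \<le> B" using h1b[of x] by linarith
        then show ?thesis by (simp add: abs_mult mult_right_mono)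
      qed simp
    qed
    also have "\<dots> = B * AP" unfolding AP_def by simp
    finally show ?thesis .
  qed
  define c where "c = IP / PP"
  have cb: "\<bar>c\<bar> \<le> c0" unfolding c_def c0_def using IPb PP0 by (simp add: abs_div divide_right_mono)
  define h' where "h' x = h1 x - c" for x
  have h'l: "\<bar>h' x - h' y\<bar> \<le> dist x y" for x y using hl[of x y] by (simp add: h'_def h1_def)
  have h'b: "\<bar>h' x\<bar> \<le> norm x + c0" for x using h1b[of x] cb by (simp add: h'_def)
  have h'cont: "continuous_on UNIV h'" unfolding h'_def[abs_def] using h1cont by (intro continuous_intros)
  have h'meas: "h' \<in> borel_measurable lborel" using h'cont by (simp add: borel_measurable_continuous_onI)
  have h'P: "(\<integral>x. h' x * Phi \<phi>0 x \<partial>lborel) = 0"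
  proof -
    have "(\<integral>x. h' x * Phi \<phi>0 x \<partial>lborel) = (\<integral>x. h1 x * Phi \<phi>0 x - c * Phi \<phi>0 x \<partial>lborel)"
      by (simp add: h'_def algebra_simps)
    also have "\<dots> = IP - c * PP" unfolding IP_def PP_def using iP csf_integrable[OF csP] by simp
    also have "\<dots> = 0" unfolding c_def using PP0 by simp
    finally show ?thesis .
  qed
  have imom: "integrable lborel (\<lambda>x. (norm x + c0) * \<bar>u x\<bar>)"
    using umom ui by (simp add: distrib_right)
  have ih'u: "integrable lborel (\<lambda>x. h' x * u x)"
  proof (rule Bochner_Integration.integrable_bound[OF imom])
    show "(\<lambda>x. h' x * u x) \<in> borel_measurable lborel" using h'meas um by simp
    have "\<bar>h' x * u x\<bar> \<le> \<bar>(norm x + c0) * \<bar>u x\<bar>\<bar>" for x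
      using h'b[of x] c00 by (simp add: abs_mult mult_right_mono)
    then show "AE x in lborel. norm (h' x * u x) \<le> norm ((norm x + c0) * \<bar>u x\<bar>)" by simp
  qed
  have hu_eq: "(\<integral>x. h x * u x \<partial>lborel) = (\<integral>x. h' x * u x \<partial>lborel)"
  proof -
    have "(\<integral>x. h x * u x \<partial>lborel) = (\<integral>x. h' x * u x + (h 0 + c) * u x \<partial>lborel)"
      by (simp add: h'_def h1_def algebra_simps)
    also have "\<dots> = (\<integral>x. h' x * u x \<partial>lborel) + (h 0 + c) * (\<integral>x. u x \<partial>lborel)"
      using ih'u ui by simp
    finally show ?thesis using u0 by simp
  qed
  define R0 where "R0 = max 1 (max c0 B)"
  define hR where "hR n x = h' x * chi (real n) x" for n :: nat and x :: "real^'n"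
  define uR where "uR n x = (if norm x \<le> real n \<and> \<bar>u x\<bar> \<le> real n then u x else 0)" for n :: nat and x :: "real^'n"
  define E where "E n = (\<integral>x. (1 + norm x) * \<bar>u x - uR n x\<bar> \<partial>lborel)" for n
  note um[measurable]
  have uRb: "\<bar>uR n x\<bar> \<le> \<bar>u x\<bar>" for n x unfolding uR_def by auto
  have uRm: "uR n \<in> borel_measurable lborel" for n unfolding uR_def[abs_def] by measurable
  have uRi: "integrable lborel (uR n)" for n
    using Bochner_Integration.integrable_bound[OF ui uRm[of n]] uRb by auto
  have iw: "integrable lborel (\<lambda>x. (1 + norm x) * \<bar>u x\<bar>)"
    using umom ui by (simp add: distrib_right)
  have iE: "integrable lborel (\<lambda>x. (1 + norm x) * \<bar>u x - uR n x\<bar>)" for n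
  proof (rule Bochner_Integration.integrable_bound[OF iw])
    show "(\<lambda>x. (1 + norm x) * \<bar>u x - uR n x\<bar>) \<in> borel_measurable lborel" using uRm[of n] by measurable
    have "\<bar>u x - uR n x\<bar> \<le> \<bar>u x\<bar>" for x unfolding uR_def by auto
    then have "\<bar>(1 + norm x) * \<bar>u x - uR n x\<bar>\<bar> \<le> \<bar>(1 + norm x) * \<bar>u x\<bar>\<bar>" for x
      by (simp add: abs_mult mult_left_mono)
    then show "AE x in lborel. norm ((1 + norm x) * \<bar>u x - uR n x\<bar>) \<le> norm ((1 + norm x) * \<bar>u x\<bar>)" by simp
  qed
  have key: "\<bar>\<integral>x. hR n x * uR n x \<partial>lborel\<bar> \<le> Cm * (S0 + K * E n)" if n: "R0 \<le> real n" for n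
  proof -
    define R where "R = real n"
    have R1: "1 \<le> R" and Rc: "c0 \<le> R" and RB: "B \<le> R" using n unfolding R_def R0_def by auto
    have R: "0 < R" using R1 by simp
    have hRcont: "continuous_on UNIV (hR n)" unfolding hR_def[abs_def] R_def[symmetric]
      using h'cont chi_cont[OF R] by (intro continuous_intros) auto
    have hRcsf: "csf (hR n) (2 * R)" unfolding csf_def
      using hRcont R by (auto simp: hR_def R_def[symmetric] chi_zero)
    have hRlip: "\<bar>hR n x - hR n y\<bar> \<le> 4 * dist x y" for x y
      unfolding hR_def R_def[symmetric] by (rule cutoff_lip[OF h'l h'b R1 Rc])
    have hRb: "\<bar>hR n x\<bar> \<le> \<bar>h' x\<bar>" for x
      unfolding hR_def using chi_bounds[of "real n" x] by (simp add: abs_mult mult_left_le)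
    have hRsq: "square_integrable (hR n)"
      unfolding square_integrable_def
      using csf_integrable_cont[OF hRcsf hRcont] csf_measurable[OF hRcsf] by (simp add: power2_eq_square)
    have uRsq: "square_integrable (uR n)"
    proof -
      have i: "integrable lborel (\<lambda>x. R * \<bar>u x\<bar>)" using ui by simp
      have "\<bar>(uR n x)\<^sup>2\<bar> \<le> \<bar>R * \<bar>u x\<bar>\<bar>" for x
      proof (cases "norm x \<le> real n \<and> \<bar>u x\<bar> \<le> real n")
        case True
        then have "\<bar>u x\<bar> * \<bar>u x\<bar> \<le> R * \<bar>u x\<bar>" unfolding R_def by (intro mult_right_mono) auto
        then show ?thesis using True R by (simp add: uR_def power2_eq_square abs_mult)
      next
        case False
        then have "uR n x = 0" unfolding uR_def by auto
        then show ?thesis by simp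
      qed
      then have ae: "AE x in lborel. norm ((uR n x)\<^sup>2) \<le> norm (R * \<bar>u x\<bar>)" by simp
      have mm: "(\<lambda>x. (uR n x)\<^sup>2) \<in> borel_measurable lborel" using uRm[of n] by measurable
      have "integrable lborel (\<lambda>x. (uR n x)\<^sup>2)"
        by (rule Bochner_Integration.integrable_bound[OF i mm ae])
      then show ?thesis unfolding square_integrable_def using uRm[of n] by simp
    qed
    have pol: "((\<lambda>a. wip (hR n) (wsys \<phi>0 \<psi>0 a) * wip (uR n) (wsys \<phi>0 \<psi>0 a)) has_sum (\<integral>x. hR n x * uR n x \<partial>lborel)) wsys_index"
      by (rule polarization[OF onb hRsq uRsq])
    have coefb: "\<bar>wip (hR n) (wsys \<phi>0 \<psi>0 a)\<bar> \<le> Cm * swt a" if a: "a \<in> wsys_index" for a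
    proof (cases a)
      case (Inl k)
      show ?thesis
      proof (cases "k = (\<lambda>_. 0)")
        case True
        have "(\<integral>x. hR n x * atom (Phi \<phi>0) 0 k x \<partial>lborel) = (\<integral>x. h' x * Phi \<phi>0 x \<partial>lborel)"
        proof (intro Bochner_Integration.integral_cong refl)
          fix x :: "real^'n"
          have at: "atom (Phi \<phi>0) 0 k x = Phi \<phi>0 x" using True by (simp add: atom_def int_vec_zero)
          show "hR n x * atom (Phi \<phi>0) 0 k x = h' x * Phi \<phi>0 x"
          proof (cases "Phi \<phi>0 x = 0")
            case False
            then have "norm x \<le> B" using csP unfolding csf_def by (meson not_le)
            then have "chi (real n) x = 1" using RB R by (intro chi_one) (auto simp: R_def)
            then show ?thesis by (simp add: hR_def at)
          qed (simp add: at)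
        qed
        then have "wip (hR n) (wsys \<phi>0 \<psi>0 a) = 0" using h'P by (simp add: Inl wsys_Inl wip_def)
        then show ?thesis using Cm0 swt_nonneg[of a] by simp
      next
        case False
        have k1: "1 \<le> norm (int_vec k)" by (rule int_vec_norm_ge1[OF False])
        have "\<bar>wip (hR n) (wsys \<phi>0 \<psi>0 a)\<bar> = \<bar>\<integral>x. hR n x * atom (Phi \<phi>0) 0 k x \<partial>lborel\<bar>"
          by (simp add: Inl wsys_Inl wip_def)
        also have "\<dots> \<le> (\<integral>x. (norm (int_vec k) + B + c0) * atom (\<lambda>y. \<bar>Phi \<phi>0 y\<bar>) 0 k x \<partial>lborel)"
        proof (rule integral_abs_bound_integral)
          show "integrable lborel (\<lambda>x. hR n x * atom (Phi \<phi>0) 0 k x)"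
            by (rule csf_integrable_cont[OF atom_csf[OF csP] hRcont])
          show "integrable lborel (\<lambda>x. (norm (int_vec k) + B + c0) * atom (\<lambda>y. \<bar>Phi \<phi>0 y\<bar>) 0 k x)"
            using csf_integrable[OF atom_csf[OF csf_abs[OF csP]]] by simp
          fix x :: "real^'n"
          show "\<bar>hR n x * atom (Phi \<phi>0) 0 k x\<bar> \<le> (norm (int_vec k) + B + c0) * atom (\<lambda>y. \<bar>Phi \<phi>0 y\<bar>) 0 k x"
          proof (cases "atom (Phi \<phi>0) 0 k x = 0")
            case False
            have "norm (2 ^ 0 *\<^sub>R x - int_vec k) \<le> B" by (rule atom_support[OF csP False])
            then have "norm (x - int_vec k) \<le> B" by simp
            moreover have "norm x \<le> norm (x - int_vec k) + norm (int_vec k)"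
              by (metis diff_add_cancel norm_triangle_ineq)
            ultimately have "\<bar>hR n x\<bar> \<le> norm (int_vec k) + B + c0" using hRb[of x] h'b[of x] by linarith
            then have "\<bar>hR n x\<bar> * \<bar>atom (Phi \<phi>0) 0 k x\<bar> \<le> (norm (int_vec k) + B + c0) * \<bar>atom (Phi \<phi>0) 0 k x\<bar>"
              by (rule mult_right_mono) simp
            then show ?thesis by (simp add: abs_mult atom_abs)
          qed (simp add: atom_abs[symmetric])
        qed
        also have "\<dots> = (norm (int_vec k) + B + c0) * AP"
          by (simp add: atom_integral AP_def)
        also have "\<dots> \<le> ((1 + B + c0) * norm (int_vec k)) * AP"
        proof (rule mult_right_mono[OF _ AP0])
          have "B + c0 \<le> (B + c0) * norm (int_vec k)" using k1 B c00 by (simp add: mult_le_cancel_left1)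
          then show "norm (int_vec k) + B + c0 \<le> (1 + B + c0) * norm (int_vec k)" by (simp add: algebra_simps)
        qed
        also have "\<dots> \<le> Cm * norm (int_vec k)"
        proof -
          have "(1 + B + c0) * AP \<le> Cm" unfolding Cm_eq using B ASs0 by simp
          then have "((1 + B + c0) * AP) * norm (int_vec k) \<le> Cm * norm (int_vec k)"
            by (rule mult_right_mono) simp
          then show ?thesis by (simp add: algebra_simps)
        qed
        finally show ?thesis by (simp add: Inl swt_def)
      qed
    next
      case (Inr p)
      then obtain l \<iota> k where p: "a = Inr (l, \<iota>, k)" by (metis prod_cases3)
      have \<iota>: "\<iota> \<in> wtypes" using a p by (auto simp: wsys_index_def)
      have "\<bar>wip (hR n) (wsys \<phi>0 \<psi>0 a)\<bar> = \<bar>\<integral>x. hR n x * atom (psi_type \<phi>0 \<psi>0 \<iota>) l k x \<partial>lborel\<bar>"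
        by (simp add: p wsys_Inr wip_def)
      also have "\<dots> \<le> 4 * B * 2 powr (- (real l * (real CARD('n) / 2 + 1))) * (\<integral>x. \<bar>psi_type \<phi>0 \<psi>0 \<iota> x\<bar> \<partial>lborel)"
        by (rule atom_lip[OF csS psi0[OF \<iota>] hRcont hRlip]) simp
      also have "\<dots> \<le> 4 * B * 2 powr (- (real l * (real CARD('n) / 2 + 1))) * ASs"
        using ASle[of \<iota>] B by (intro mult_left_mono) auto
      also have "\<dots> = (4 * B * ASs) * 2 powr (- (real l * (real CARD('n) / 2 + 1)))" by simp
      also have "\<dots> \<le> Cm * 2 powr (- (real l * (real CARD('n) / 2 + 1)))"
      proof (rule mult_right_mono)
        show "4 * B * ASs \<le> Cm" unfolding Cm_eq using B c00 AP0 by simp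
      qed simp
      finally show ?thesis by (simp add: p swt_def)
    qed
    show ?thesis
    proof (rule has_sum_abs_le[OF pol])
      fix F :: "(('n \<Rightarrow> int) + (nat \<times> ('n \<Rightarrow> bool) \<times> ('n \<Rightarrow> int))) set"
      assume F: "finite F" "F \<subseteq> wsys_index"
      let ?b = "\<lambda>a. wsys \<phi>0 \<psi>0 a :: real^'n \<Rightarrow> real"
      have lin: "wip (uR n) (?b a) = wip u (?b a) - wip (\<lambda>x. u x - uR n x) (?b a)" for a
      proof -
        obtain R' where cs: "csf (?b a) R'" using wsys_csf[OF c1 c2] by blast
        have "integrable lborel (\<lambda>x. u x * ?b a x)" by (rule csf_integrable_mult[OF cs ui])
        moreover have "integrable lborel (\<lambda>x. uR n x * ?b a x)" by (rule csf_integrable_mult[OF cs uRi])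
        ultimately show ?thesis unfolding wip_def by (simp add: left_diff_distrib)
      qed
      have "\<bar>\<Sum>a\<in>F. wip (hR n) (?b a) * wip (uR n) (?b a)\<bar> \<le> (\<Sum>a\<in>F. \<bar>wip (hR n) (?b a)\<bar> * \<bar>wip (uR n) (?b a)\<bar>)"
        by (rule order_trans[OF sum_abs]) (simp add: abs_mult)
      also have "\<dots> \<le> (\<Sum>a\<in>F. Cm * (swt a * \<bar>wip u (?b a)\<bar> + om 1 a * \<bar>wip (\<lambda>x. u x - uR n x) (?b a)\<bar>))"
      proof (rule sum_mono)
        fix a assume a: "a \<in> F"
        have "\<bar>wip (hR n) (?b a)\<bar> * \<bar>wip (uR n) (?b a)\<bar> \<le> (Cm * swt a) * \<bar>wip (uR n) (?b a)\<bar>"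
          using coefb a F by (intro mult_right_mono) auto
        also have "\<dots> \<le> (Cm * swt a) * (\<bar>wip u (?b a)\<bar> + \<bar>wip (\<lambda>x. u x - uR n x) (?b a)\<bar>)"
          unfolding lin using Cm0 swt_nonneg[of a] by (intro mult_left_mono abs_triangle_ineq4) auto
        also have "\<dots> \<le> Cm * (swt a * \<bar>wip u (?b a)\<bar> + om 1 a * \<bar>wip (\<lambda>x. u x - uR n x) (?b a)\<bar>)"
          using Cm0 swt_le_om[of a] by (simp add: algebra_simps mult_left_mono mult_right_mono)
        finally show "\<bar>wip (hR n) (?b a)\<bar> * \<bar>wip (uR n) (?b a)\<bar> \<le> Cm * (swt a * \<bar>wip u (?b a)\<bar> + om 1 a * \<bar>wip (\<lambda>x. u x - uR n x) (?b a)\<bar>)" .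
      qed
      also have "\<dots> = Cm * ((\<Sum>a\<in>F. swt a * \<bar>wip u (?b a)\<bar>) + (\<Sum>a\<in>F. om 1 a * \<bar>wip (\<lambda>x. u x - uR n x) (?b a)\<bar>))"
        by (simp only: sum.distrib[symmetric] sum_distrib_left)
      also have "\<dots> \<le> Cm * (S0 + K * E n)"
      proof (rule mult_left_mono[OF add_mono Cm0])
        show "(\<Sum>a\<in>F. swt a * \<bar>wip u (?b a)\<bar>) \<le> S0" by (rule Sb[OF F])
        have "(\<Sum>a\<in>F. om 1 a * \<bar>wip (\<lambda>x. u x - uR n x) (?b a)\<bar>) \<le> K * (\<integral>x. (1 + 1 * norm x) * \<bar>u x - uR n x\<bar> \<partial>lborel)"
          unfolding K_def using uRm[of n] iE[of n]
          by (intro coef_sum_real[OF c1 c2 m1 m2 _ F(1)]) auto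
        then show "(\<Sum>a\<in>F. om 1 a * \<bar>wip (\<lambda>x. u x - uR n x) (?b a)\<bar>) \<le> K * E n" by (simp add: E_def)
      qed
      finally show "\<bar>\<Sum>a\<in>F. wip (hR n) (?b a) * wip (uR n) (?b a)\<bar> \<le> Cm * (S0 + K * E n)" .
    qed
  qed
  have limE: "E \<longlonglongrightarrow> 0"
  proof -
    have "(\<lambda>n. \<integral>x. (1 + norm x) * \<bar>u x - uR n x\<bar> \<partial>lborel) \<longlonglongrightarrow> (\<integral>x. 0 \<partial>(lborel :: (real^'n) measure))"
    proof (rule integral_dominated_convergence[where s="\<lambda>n x. (1 + norm x) * \<bar>u x - uR n x\<bar>" and f="\<lambda>x. 0" and w="\<lambda>x. (1 + norm x) * \<bar>u x\<bar>"])
      show "integrable lborel (\<lambda>x. (1 + norm x) * \<bar>u x\<bar>)" by (rule iw)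
      show "(\<lambda>x. 0::real) \<in> borel_measurable (lborel :: (real^'n) measure)" by simp
      show "(\<lambda>x. (1 + norm x) * \<bar>u x - uR n x\<bar>) \<in> borel_measurable lborel" for n using uRm[of n] by measurable
      show "AE x in lborel. (\<lambda>n. (1 + norm x) * \<bar>u x - uR n x\<bar>) \<longlonglongrightarrow> 0"
      proof (rule AE_I2)
        fix x :: "real^'n"
        have "eventually (\<lambda>n. (1 + norm x) * \<bar>u x - uR n x\<bar> = 0) sequentially"
        proof (rule eventually_sequentiallyI[of "nat \<lceil>max (norm x) \<bar>u x\<bar>\<rceil>"])
          fix n assume "nat \<lceil>max (norm x) \<bar>u x\<bar>\<rceil> \<le> n"
          then have "max (norm x) \<bar>u x\<bar> \<le> real n" by linarith
          then show "(1 + norm x) * \<bar>u x - uR n x\<bar> = 0" by (simp add: uR_def)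
        qed
        then show "(\<lambda>n. (1 + norm x) * \<bar>u x - uR n x\<bar>) \<longlonglongrightarrow> 0" by (rule tendsto_eventually)
      qed
      show "AE x in lborel. norm ((1 + norm x) * \<bar>u x - uR n x\<bar>) \<le> (1 + norm x) * \<bar>u x\<bar>" for n
      proof (rule AE_I2)
        fix x
        have "\<bar>u x - uR n x\<bar> \<le> \<bar>u x\<bar>" unfolding uR_def by auto
        then show "norm ((1 + norm x) * \<bar>u x - uR n x\<bar>) \<le> (1 + norm x) * \<bar>u x\<bar>"
          by (simp add: abs_mult mult_left_mono)
      qed
    qed
    then show ?thesis unfolding E_def[abs_def] by simp
  qed
  have limI: "(\<lambda>n. \<integral>x. hR n x * uR n x \<partial>lborel) \<longlonglongrightarrow> (\<integral>x. h' x * u x \<partial>lborel)"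
  proof (rule integral_dominated_convergence[where s="\<lambda>n x. hR n x * uR n x" and f="\<lambda>x. h' x * u x" and w="\<lambda>x. (norm x + c0) * \<bar>u x\<bar>"])
    show "integrable lborel (\<lambda>x. (norm x + c0) * \<bar>u x\<bar>)" by (rule imom)
    show "(\<lambda>x. h' x * u x) \<in> borel_measurable lborel" using h'meas by measurable
    show "(\<lambda>x. hR n x * uR n x) \<in> borel_measurable lborel" for n
    proof -
      have "chi (real n) \<in> borel_measurable (lborel :: (real^'n) measure)"
        unfolding chi_def[abs_def] by measurable
      then show ?thesis unfolding hR_def using h'meas uRm[of n] by measurable
    qed
    show "AE x in lborel. (\<lambda>n. hR n x * uR n x) \<longlonglongrightarrow> h' x * u x"
    proof (rule AE_I2)
      fix x :: "real^'n"
      have "eventually (\<lambda>n. hR n x * uR n x = h' x * u x) sequentially"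
      proof (rule eventually_sequentiallyI[of "nat \<lceil>max 1 (max (norm x) \<bar>u x\<bar>)\<rceil>"])
        fix n assume "nat \<lceil>max 1 (max (norm x) \<bar>u x\<bar>)\<rceil> \<le> n"
        then have n: "max 1 (max (norm x) \<bar>u x\<bar>) \<le> real n" by linarith
        then have "chi (real n) x = 1" by (intro chi_one) auto
        then show "hR n x * uR n x = h' x * u x" using n by (simp add: hR_def uR_def)
      qed
      then show "(\<lambda>n. hR n x * uR n x) \<longlonglongrightarrow> h' x * u x" by (rule tendsto_eventually)
    qed
    show "AE x in lborel. norm (hR n x * uR n x) \<le> (norm x + c0) * \<bar>u x\<bar>" for n
    proof (rule AE_I2)
      fix x :: "real^'n"
      have "\<bar>hR n x\<bar> \<le> norm x + c0" unfolding hR_def using chi_bounds[of "real n" x] h'b[of x]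
        by (simp add: abs_mult) (metis mult.commute mult_left_le order_trans abs_ge_zero)
      then show "norm (hR n x * uR n x) \<le> (norm x + c0) * \<bar>u x\<bar>"
        using uRb[of n x] by (simp add: abs_mult mult_mono)
    qed
  qed
  have "(\<integral>x. h' x * u x \<partial>lborel) \<le> Cm * (S0 + K * 0)"
  proof (rule LIMSEQ_le[OF limI])
    show "(\<lambda>n. Cm * (S0 + K * E n)) \<longlonglongrightarrow> Cm * (S0 + K * 0)"
      by (intro tendsto_intros limE)
    show "\<exists>N. \<forall>n\<ge>N. (\<integral>x. hR n x * uR n x \<partial>lborel) \<le> Cm * (S0 + K * E n)"
    proof (intro exI allI impI)
      fix n assume "nat \<lceil>R0\<rceil> \<le> n"
      then have "R0 \<le> real n" by linarith
      from key[OF this] show "(\<integral>x. hR n x * uR n x \<partial>lborel) \<le> Cm * (S0 + K * E n)" by simp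
    qed
  qed
  then show ?thesis using hu_eq unfolding Cm_def by simp
qed

lemma fin_le_infsum:
  fixes f :: "'a \<Rightarrow> ennreal"
  assumes "finite A" "A \<subseteq> B"
  shows "sum f A \<le> infsum f B"
proof -
  have "sum f A = infsum f A" using assms(1) by simp
  also have "\<dots> \<le> infsum f B"
    by (rule infsum_mono_neutral) (use assms(2) in \<open>auto intro: nonneg_summable_on_complete\<close>)
  finally show ?thesis .
qed

lemma rhs_partial:
  fixes w :: "real^'n::finite \<Rightarrow> real"
  assumes F: "finite F" "F \<subseteq> wsys_index"
  shows "ennreal (\<Sum>a\<in>F. swt a * \<bar>wip w (wsys \<phi>0 \<psi>0 a)\<bar>)
    \<le> (\<Sum>\<^sub>\<infinity>k\<in>UNIV. ennreal (norm (int_vec k) * \<bar>wip w (phi_k \<phi>0 k)\<bar>))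
      + (\<Sum>\<^sub>\<infinity>l\<in>UNIV. \<Sum>\<^sub>\<infinity>(\<iota>, k)\<in>wtypes \<times> UNIV.
           ennreal (2 powr (- (real l * (real CARD('n) / 2 + 1))) * \<bar>wip w (psi_lk \<phi>0 \<psi>0 l \<iota> k)\<bar>))"
proof -
  define G where "G a = swt a * \<bar>wip w (wsys \<phi>0 \<psi>0 a)\<bar>" for a :: "('n \<Rightarrow> int) + (nat \<times> ('n \<Rightarrow> bool) \<times> ('n \<Rightarrow> int))"
  have G0: "0 \<le> G a" for a unfolding G_def using swt_nonneg[of a] by simp
  define F1 where "F1 = Inl -` F"
  define F2 where "F2 = Inr -` F"
  have fF1: "finite F1" using F unfolding F1_def by (auto intro: finite_vimageI inj_onI)
  have fF2: "finite F2" using F unfolding F2_def by (auto intro: finite_vimageI inj_onI)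
  have F2sub: "F2 \<subseteq> UNIV \<times> wtypes \<times> UNIV" using F(2) unfolding F2_def wsys_index_def by auto
  have spl: "(\<Sum>a\<in>F. G a) = (\<Sum>k\<in>F1. G (Inl k)) + (\<Sum>p\<in>F2. G (Inr p))"
    unfolding F1_def F2_def by (rule split_sum_Plus[OF F(1)])
  have A1: "ennreal (\<Sum>k\<in>F1. G (Inl k)) \<le> (\<Sum>\<^sub>\<infinity>k\<in>UNIV. ennreal (norm (int_vec k) * \<bar>wip w (phi_k \<phi>0 k)\<bar>))"
  proof -
    have "ennreal (\<Sum>k\<in>F1. G (Inl k)) = (\<Sum>k\<in>F1. ennreal (G (Inl k)))"
      by (rule sum_ennreal[symmetric]) (simp add: G0)
    also have "\<dots> = (\<Sum>k\<in>F1. ennreal (norm (int_vec k) * \<bar>wip w (phi_k \<phi>0 k)\<bar>))"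
      by (simp add: G_def swt_def wsys_def)
    also have "\<dots> \<le> (\<Sum>\<^sub>\<infinity>k\<in>UNIV. ennreal (norm (int_vec k) * \<bar>wip w (phi_k \<phi>0 k)\<bar>))"
      by (rule fin_le_infsum[OF fF1]) simp
    finally show ?thesis .
  qed
  define Hf where "Hf l q = ennreal (2 powr (- (real l * (real CARD('n) / 2 + 1))) * \<bar>wip w (psi_lk \<phi>0 \<psi>0 l (fst q) (snd q))\<bar>)"
    for l and q :: "('n \<Rightarrow> bool) \<times> ('n \<Rightarrow> int)"
  have A2: "ennreal (\<Sum>p\<in>F2. G (Inr p)) \<le> (\<Sum>\<^sub>\<infinity>l\<in>UNIV. \<Sum>\<^sub>\<infinity>(\<iota>, k)\<in>wtypes \<times> UNIV.
           ennreal (2 powr (- (real l * (real CARD('n) / 2 + 1))) * \<bar>wip w (psi_lk \<phi>0 \<psi>0 l \<iota> k)\<bar>))"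
  proof -
    define Ls where "Ls = fst ` F2"
    define Q where "Q l = {q. (l, q) \<in> F2}" for l
    have F2eq: "F2 = Sigma Ls Q" unfolding Ls_def Q_def by force
    have fLs: "finite Ls" using fF2 unfolding Ls_def by simp
    have fQ: "finite (Q l)" for l
    proof -
      have "Q l = snd ` (F2 \<inter> {p. fst p = l})" unfolding Q_def by force
      then show ?thesis using fF2 by simp
    qed
    have Qsub: "Q l \<subseteq> wtypes \<times> UNIV" for l using F2sub unfolding Q_def by auto
    have "ennreal (\<Sum>p\<in>F2. G (Inr p)) = (\<Sum>p\<in>F2. ennreal (G (Inr p)))"
      by (rule sum_ennreal[symmetric]) (simp add: G0)
    also have "\<dots> = (\<Sum>l\<in>Ls. \<Sum>q\<in>Q l. ennreal (G (Inr (l, q))))"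
      unfolding F2eq using fLs fQ by (subst sum.Sigma) auto
    also have "\<dots> = (\<Sum>l\<in>Ls. \<Sum>q\<in>Q l. Hf l q)"
      by (intro sum.cong refl) (simp add: G_def Hf_def swt_def wsys_def split_def)
    also have "\<dots> \<le> (\<Sum>l\<in>Ls. \<Sum>\<^sub>\<infinity>q\<in>wtypes \<times> UNIV. Hf l q)"
      by (intro sum_mono fin_le_infsum fQ Qsub)
    also have "\<dots> \<le> (\<Sum>\<^sub>\<infinity>l\<in>UNIV. \<Sum>\<^sub>\<infinity>q\<in>wtypes \<times> UNIV. Hf l q)"
      by (rule fin_le_infsum[OF fLs]) simp
    also have "\<dots> = (\<Sum>\<^sub>\<infinity>l\<in>UNIV. \<Sum>\<^sub>\<infinity>(\<iota>, k)\<in>wtypes \<times> UNIV.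
           ennreal (2 powr (- (real l * (real CARD('n) / 2 + 1))) * \<bar>wip w (psi_lk \<phi>0 \<psi>0 l \<iota> k)\<bar>))"
      by (simp add: Hf_def split_def)
    finally show ?thesis .
  qed
  have eq: "ennreal (\<Sum>a\<in>F. swt a * \<bar>wip w (wsys \<phi>0 \<psi>0 a)\<bar>) = ennreal (\<Sum>k\<in>F1. G (Inl k)) + ennreal (\<Sum>p\<in>F2. G (Inr p))"
    unfolding G_def[symmetric] spl using G0 by (simp add: ennreal_plus sum_nonneg)
  show ?thesis unfolding eq by (rule add_mono[OF A1 A2])
qed

theorem mainTheorem7:
  fixes S :: nat and \<phi>0 \<psi>0 :: "real \<Rightarrow> real"
  assumes "wavelet_basis TYPE('n::finite) S \<phi>0 \<psi>0"
  shows "\<exists>C>0. \<forall>(f :: real^'n \<Rightarrow> real) (g :: real^'n \<Rightarrow> real).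
           prob_density f \<and> finite_first_moment f \<and>
           g \<in> borel_measurable lborel \<and> integrable lborel g \<and> (LINT x|lborel. g x) = 1 \<and>
           finite_first_moment g
           \<longrightarrow> ennreal (W1 g f) \<le> ennreal C *
                 ((\<Sum>\<^sub>\<infinity>k\<in>UNIV. ennreal (norm (int_vec k) *
                        \<bar>wip (\<lambda>x. f x - g x) (phi_k \<phi>0 k)\<bar>))
                + (\<Sum>\<^sub>\<infinity>l\<in>UNIV. \<Sum>\<^sub>\<infinity>(\<iota>, k)\<in>wtypes \<times> UNIV.
                     ennreal (2 powr (- (real l * (real CARD('n) / 2 + 1))) *
                        \<bar>wip (\<lambda>x. f x - g x) (psi_lk \<phi>0 \<psi>0 l \<iota> k)\<bar>)))"
proof -
  note wb = assms
  obtain B0 m where c1: "csf \<phi>0 B0" and c2: "csf \<psi>0 B0" and m1: "\<And>t. \<bar>\<phi>0 t\<bar> \<le> m" and m2: "\<And>t. \<bar>\<psi>0 t\<bar> \<le> m"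
     and onb: "is_ONB (wsys \<phi>0 \<psi>0 :: _ \<Rightarrow> real^'n \<Rightarrow> real) wsys_index"
    using wb_basic[OF wb] by metis
  have B0: "0 \<le> B0" using c1 by (simp add: csf_def)
  have P0: "(\<integral>x. Phi \<phi>0 (x::real^'n) \<partial>lborel) \<noteq> 0" by (rule wb_phi_nonzero[OF wb])
  have psi0: "\<And>\<iota>. \<iota> \<in> wtypes \<Longrightarrow> (\<integral>x. psi_type \<phi>0 \<psi>0 \<iota> (x::real^'n) \<partial>lborel) = 0"
    by (rule wb_psi_zero[OF wb])
  define Cm where "Cm = Cmain TYPE('n) \<phi>0 \<psi>0 B0"
  have Cm0: "0 \<le> Cm" unfolding Cm_def by (rule Cmain_nonneg[OF B0])
  define C where "C = Cm + 1"
  have C0: "0 < C" using Cm0 by (simp add: C_def)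
  show ?thesis
  proof (intro exI[of _ C] conjI allI impI C0)
    fix f g :: "real^'n \<Rightarrow> real"
    assume fg: "prob_density f \<and> finite_first_moment f \<and>
           g \<in> borel_measurable lborel \<and> integrable lborel g \<and> (LINT x|lborel. g x) = 1 \<and>
           finite_first_moment g"
    have fm: "f \<in> borel_measurable lborel" and fi: "integrable lborel f" and f1: "(\<integral>x. f x \<partial>lborel) = 1"
      using fg unfolding prob_density_def by auto
    have fmom: "integrable lborel (\<lambda>x. norm x * \<bar>f x\<bar>)" using fg unfolding finite_first_moment_def by auto
    have gm: "g \<in> borel_measurable lborel" and gi: "integrable lborel g" and g1: "(\<integral>x. g x \<partial>lborel) = 1"
      using fg by auto
    have gmom: "integrable lborel (\<lambda>x. norm x * \<bar>g x\<bar>)" using fg unfolding finite_first_moment_def by auto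
    define u where "u x = g x - f x" for x
    have um: "u \<in> borel_measurable lborel" unfolding u_def[abs_def] using fm gm by simp
    have ui: "integrable lborel u" unfolding u_def[abs_def] using fi gi by simp
    have u0: "(\<integral>x. u x \<partial>lborel) = 0" unfolding u_def using fi gi f1 g1 by simp
    have umom: "integrable lborel (\<lambda>x. norm x * \<bar>u x\<bar>)"
    proof (rule Bochner_Integration.integrable_bound[where f="\<lambda>x. norm x * \<bar>g x\<bar> + norm x * \<bar>f x\<bar>"])
      show "integrable lborel (\<lambda>x. norm x * \<bar>g x\<bar> + norm x * \<bar>f x\<bar>)" using fmom gmom by simp
      show "(\<lambda>x. norm x * \<bar>u x\<bar>) \<in> borel_measurable lborel" using um by measurable
      have "\<bar>norm x * \<bar>u x\<bar>\<bar> \<le> \<bar>norm x * \<bar>g x\<bar> + norm x * \<bar>f x\<bar>\<bar>" for x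
      proof -
        have "\<bar>u x\<bar> \<le> \<bar>g x\<bar> + \<bar>f x\<bar>" unfolding u_def by simp
        then have "norm x * \<bar>u x\<bar> \<le> norm x * (\<bar>g x\<bar> + \<bar>f x\<bar>)" by (intro mult_left_mono) auto
        then show ?thesis by (simp add: distrib_left)
      qed
      then show "AE x in lborel. norm (norm x * \<bar>u x\<bar>) \<le> norm (norm x * \<bar>g x\<bar> + norm x * \<bar>f x\<bar>)" by simp
    qed
    define T where "T = (\<Sum>\<^sub>\<infinity>k\<in>UNIV. ennreal (norm (int_vec k) *
                        \<bar>wip (\<lambda>x. f x - g x) (phi_k \<phi>0 k)\<bar>))
                + (\<Sum>\<^sub>\<infinity>l\<in>UNIV. \<Sum>\<^sub>\<infinity>(\<iota>, k)\<in>wtypes \<times> UNIV.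
                     ennreal (2 powr (- (real l * (real CARD('n) / 2 + 1))) *
                        \<bar>wip (\<lambda>x. f x - g x) (psi_lk \<phi>0 \<psi>0 l \<iota> k)\<bar>))"
    show "ennreal (W1 g f) \<le> ennreal C * T"
    proof (cases "T = top")
      case True
      then show ?thesis using C0 by simp
    next
      case False
      define S0 where "S0 = enn2real T"
      have TS: "T = ennreal S0" using False unfolding S0_def by (simp add: less_top)
      have S00: "0 \<le> S0" unfolding S0_def by simp
      have wsym: "\<bar>wip u b\<bar> = \<bar>wip (\<lambda>x. f x - g x) b\<bar>" for b :: "real^'n \<Rightarrow> real"
      proof -
        have "wip u b = - wip (\<lambda>x. f x - g x) b"
          unfolding wip_def u_def by (simp add: algebra_simps integral_minus[symmetric])
        then show ?thesis by simp
      qed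
      have Sb: "(\<Sum>a\<in>F. swt a * \<bar>wip u (wsys \<phi>0 \<psi>0 a)\<bar>) \<le> S0" if F: "finite F" "F \<subseteq> wsys_index" for F
      proof -
        have "ennreal (\<Sum>a\<in>F. swt a * \<bar>wip u (wsys \<phi>0 \<psi>0 a)\<bar>) \<le> T"
          unfolding wsym T_def by (rule rhs_partial[OF F])
        then show ?thesis unfolding TS using S00 by (simp add: ennreal_le_iff)
      qed
      have hb: "(\<integral>x. h x * (g x - f x) \<partial>lborel) \<le> Cm * S0" if h: "1-lipschitz_on UNIV h" for h :: "real^'n \<Rightarrow> real"
        using main_h[OF c1 c2 m1 m2 P0 psi0 onb um ui umom u0 h Sb] unfolding Cm_def u_def by simp
      have "W1 g f \<le> Cm * S0"
        unfolding W1_def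
      proof (rule cSUP_least)
        have "0-lipschitz_on UNIV (\<lambda>_::real^'n. 0::real)" by (simp add: lipschitz_on_def)
        then have "1-lipschitz_on UNIV (\<lambda>_::real^'n. 0::real)" by (rule lipschitz_on_le) simp
        then show "{h :: real^'n \<Rightarrow> real. 1-lipschitz_on UNIV h} \<noteq> {}" by blast
      qed (use hb in auto)
      also have "\<dots> \<le> C * S0" unfolding C_def using S00 by (simp add: distrib_right)
      finally have "ennreal (W1 g f) \<le> ennreal (C * S0)" by (rule ennreal_leI)
      also have "\<dots> = ennreal C * T" unfolding TS using C0 S00 by (simp add: ennreal_mult)
      finally show ?thesis .
    qed
  qed
qed

end
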